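(* Let $X_0:=0$, let $X_1,X_2,\dots$ be independent uniform random variables on $(0,1]$, and for $m\ge1$ let $Z_m:=X_m-\max\{X_j:0\le j<m,\ X_j<X_m\}$. Then for $1\le m<\ell$, $\mathrm{Cov}[Z_m,Z_\ell]=0$. *)

theory Defs
  imports "HOL-Probability.Probability"
begin

definition covariance :: "'a measure \<Rightarrow> ('a \<Rightarrow> real) \<Rightarrow> ('a \<Rightarrow> real) \<Rightarrow> real" where
  "covariance M U V =
     (\<integral>\<omega>. (U \<omega> - (\<integral>x. U x \<partial>M)) * (V \<omega> - (\<integral>x. V x \<partial>M)) \<partial>M)"

definition gapZ :: "(nat \<Rightarrow> 'a \<Rightarrow> real) \<Rightarrow> nat \<Rightarrow> 'a \<Rightarrow> real" where
  "gapZ X m \<omega> = X m \<omega> - Max {X j \<omega> | j. j < m \<and> X j \<omega> < X m \<omega>}"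

end

theory Submission
  imports Defs
begin


definition Am :: "nat \<Rightarrow> real \<Rightarrow> (nat \<Rightarrow> real) \<Rightarrow> bool" where
  "Am n s x \<longleftrightarrow> s < x n \<and> (\<forall>j\<in>{1..<n}. \<not> (x n - s \<le> x j \<and> x j < x n))"

definition UU :: "real measure" where "UU = uniform_measure lborel {0<..1}"

definition lamf :: "real \<Rightarrow> real \<Rightarrow> real \<Rightarrow> real \<Rightarrow> real" where
  "lamf s t x y = s + t - max 0 (min x y - max (x - s) (y - t))"

definition Wf :: "nat \<Rightarrow> nat \<Rightarrow> real \<Rightarrow> real \<Rightarrow> real \<Rightarrow> real \<Rightarrow> real" where
  "Wf m k s t x y = (if s < x \<and> x \<le> 1 \<and> t < y \<and> y \<le> 1 \<and> (x < y - t \<or> y \<le> x)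
      then (1 - lamf s t x y) ^ (m - 1) * (1 - t) ^ k else 0)"

definition Qf :: "nat \<Rightarrow> nat \<Rightarrow> real \<Rightarrow> real \<Rightarrow> ennreal" where
  "Qf m k s t = (\<integral>\<^sup>+ y. \<integral>\<^sup>+ x. ennreal (Wf m k s t x y) \<partial>lborel \<partial>lborel)"

lemma pred_Am:
  assumes "1 \<le> n" "n \<le> l" and [measurable]: "f \<in> N \<rightarrow>\<^sub>M PiM {1..l} (\<lambda>_. borel)" "g \<in> borel_measurable N"
  shows "Measurable.pred N (\<lambda>p. Am n (g p) (f p))"
proof -
  have fm: "(\<lambda>p. f p j) \<in> borel_measurable N" if "j \<in> {1..l}" for j
    using that by measurable
  have [measurable]: "(\<lambda>p. f p n) \<in> borel_measurable N" using fm assms by auto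
  have "Measurable.pred N (\<lambda>p. \<forall>j\<in>{1..<n}. \<not> (f p n - g p \<le> f p j \<and> f p j < f p n))"
  proof (rule pred_intros_countable_bounded(3))
    fix j assume "j \<in> {1..<n}"
    then have [measurable]: "(\<lambda>p. f p j) \<in> borel_measurable N" using fm assms by auto
    show "Measurable.pred N (\<lambda>p. \<not> (f p n - g p \<le> f p j \<and> f p j < f p n))" by measurable
  qed
  moreover have "Measurable.pred N (\<lambda>p. g p < f p n)" by measurable
  ultimately show ?thesis unfolding Am_def by (rule pred_intros_logic(3)[rotated])
qed



lemma nn_FTC:
  fixes F f :: "real \<Rightarrow> real"
  assumes "a \<le> b" "\<And>x. a \<le> x \<Longrightarrow> x \<le> b \<Longrightarrow> (F has_real_derivative f x) (at x)"
    "\<And>x. a \<le> x \<Longrightarrow> x \<le> b \<Longrightarrow> 0 \<le> f x"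
  shows "(\<integral>\<^sup>+ x. ennreal (f x) * indicator {a..b} x \<partial>lborel) = ennreal (F b - F a)"
proof (rule nn_integral_has_integral_lebesgue')
  show "(f has_integral F b - F a) {a..b}"
    using assms(1) 
  proof (rule fundamental_theorem_of_calculus)
    fix x assume "x \<in> {a..b}"
    then show "(F has_vector_derivative f x) (at x within {a..b})"
      using assms(2)[of x] by (auto simp: has_real_derivative_iff_has_vector_derivative[symmetric] intro: DERIV_subset)
  qed
qed (use assms in auto)

lemma FTC_nonneg:
  fixes F f :: "real \<Rightarrow> real"
  assumes "a \<le> b" "\<And>x. a \<le> x \<Longrightarrow> x \<le> b \<Longrightarrow> (F has_real_derivative f x) (at x)"
    "\<And>x. a \<le> x \<Longrightarrow> x \<le> b \<Longrightarrow> 0 \<le> f x"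
  shows "0 \<le> F b - F a"
proof -
  have "(f has_integral F b - F a) {a..b}"
    using assms(1)
  proof (rule fundamental_theorem_of_calculus)
    fix x assume "x \<in> {a..b}"
    then show "(F has_vector_derivative f x) (at x within {a..b})"
      using assms(2)[of x] by (auto simp: has_real_derivative_iff_has_vector_derivative[symmetric] intro: DERIV_subset)
  qed
  then show ?thesis using assms(3) by (rule has_integral_nonneg) auto
qed

lemma nn_const_Ioc:
  assumes "a \<le> b" "0 \<le> c"
  shows "(\<integral>\<^sup>+ x. ennreal c * indicator {a<..b} x \<partial>lborel) = ennreal (c * (b - a))"
  using assms by (simp add: nn_integral_cmult_indicator ennreal_mult)

lemma lamf_t0: "0 \<le> s \<Longrightarrow> lamf s 0 x y = s"
  unfolding lamf_def by (auto simp: max_def min_def)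

lemma Qf_s0:
  assumes "1 \<le> m" "0 \<le> s"
  shows "Qf m k s 0 = ennreal ((1 - s) ^ m) * indicator {..1} s"
proof -
  have "Qf m k s 0 = (\<integral>\<^sup>+ y. (\<integral>\<^sup>+ x. ennreal ((1 - s) ^ (m - 1)) * indicator {s<..1} x \<partial>lborel) * indicator {0<..1} (y::real) \<partial>lborel)"
    unfolding Qf_def
  proof (rule nn_integral_cong)
    fix y :: real
    show "(\<integral>\<^sup>+ x. ennreal (Wf m k s 0 x y) \<partial>lborel) = (\<integral>\<^sup>+ x. ennreal ((1 - s) ^ (m - 1)) * indicator {s<..1} x \<partial>lborel) * indicator {0<..1} y"
    proof (cases "0 < y \<and> y \<le> 1")
      case True
      then show ?thesis using assms by (auto intro!: nn_integral_cong simp: Wf_def lamf_t0 indicator_def)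
    next
      case False
      then show ?thesis by (auto simp: Wf_def indicator_def)
    qed
  qed
  also have "\<dots> = ennreal ((1 - s) ^ m) * indicator {..1} s"
  proof (cases "s \<le> 1")
    case True
    then have "(\<integral>\<^sup>+ x. ennreal ((1 - s) ^ (m - 1)) * indicator {s<..1} x \<partial>lborel) = ennreal ((1 - s) ^ m)"
      using assms by (subst nn_const_Ioc) (auto simp: power_eq_if[of _ m])
    then show ?thesis using True by (simp add: nn_integral_cmult_indicator)
  next
    case False
    then show ?thesis by simp
  qed
  finally show ?thesis .
qed

lemma C2: assumes "1 \<le> m"
  shows "(\<integral>\<^sup>+ s. indicator {0..} s * Qf m k s 0 \<partial>lborel) = ennreal (1 / (m+1))"
proof -
  have "(\<integral>\<^sup>+ s. indicator {0..} s * Qf m k s 0 \<partial>lborel) = (\<integral>\<^sup>+ s. ennreal ((1 - s) ^ m) * indicator {0..1} s \<partial>lborel)"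
    using assms by (intro nn_integral_cong) (auto simp: Qf_s0 indicator_def)
  also have "\<dots> = ennreal ((\<lambda>s. - ((1 - s) ^ Suc m) / real (Suc m)) 1 - (\<lambda>s. - ((1 - s) ^ Suc m) / real (Suc m)) 0)"
  proof (rule nn_FTC)
    fix x :: real
    show "((\<lambda>s. - ((1 - s) ^ Suc m) / real (Suc m)) has_real_derivative (1 - x) ^ m) (at x)"
      by (rule derivative_eq_intros refl | simp)+
  qed auto
  also have "\<dots> = ennreal (1 / (m + 1))" by simp
  finally show ?thesis by simp
qed

lemma lamf_s0: "0 \<le> t \<Longrightarrow> (x < y - t \<or> y \<le> x) \<Longrightarrow> lamf 0 t x y = t"
  unfolding lamf_def by (auto simp: max_def min_def)

lemma Qf_t0:
  assumes "1 \<le> m" "0 \<le> t"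
  shows "Qf m k 0 t = ennreal ((1 - t) ^ (m + k + 1)) * indicator {..1} t"
proof -
  define c where "c = (1 - t) ^ (m - 1) * (1 - t) ^ k"
  have inner: "(\<integral>\<^sup>+ x. ennreal (Wf m k 0 t x y) \<partial>lborel) = ennreal (c * (1 - t)) * indicator {t<..1} y" for y
  proof (cases "t < y \<and> y \<le> 1")
    case True
    have c0: "0 \<le> c" using True by (simp add: c_def)
    have "(\<integral>\<^sup>+ x. ennreal (Wf m k 0 t x y) \<partial>lborel) =
        (\<integral>\<^sup>+ x. ennreal c * indicator {0<..y - t} x + ennreal c * indicator {y<..1} x \<partial>lborel)"
    proof (rule nn_integral_cong_AE)
      show "AE x in lborel. ennreal (Wf m k 0 t x y) = ennreal c * indicator {0<..y - t} x + ennreal c * indicator {y<..1} x"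
        using AE_lborel_singleton[of y] AE_lborel_singleton[of "y - t"]
      proof eventually_elim
        case (elim x)
        then show ?case using True assms
          by (auto simp: Wf_def lamf_s0 c_def indicator_def)
      qed
    qed
    also have "\<dots> = ennreal (c * (y - t)) + ennreal (c * (1 - y))"
      using True c0 by (subst nn_integral_add) (auto simp: nn_const_Ioc)
    also have "\<dots> = ennreal (c * (1 - t))"
      using True c0 by (subst ennreal_plus[symmetric]) (auto simp: algebra_simps intro: mult_left_mono mult_left_le)
    finally show ?thesis using True by simp
  next
    case False
    then show ?thesis by (auto simp: Wf_def)
  qed
  have "Qf m k 0 t = (\<integral>\<^sup>+ y. ennreal (c * (1 - t)) * indicator {t<..1} y \<partial>lborel)"
    unfolding Qf_def inner ..
  also have "\<dots> = ennreal ((1 - t) ^ (m + k + 1)) * indicator {..1} t"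
  proof (cases "t \<le> 1")
    case True
    then have "(\<integral>\<^sup>+ y. ennreal (c * (1 - t)) * indicator {t<..1} y \<partial>lborel) = ennreal (c * (1 - t) * (1 - t))"
      by (subst nn_const_Ioc) (auto simp: c_def)
    also have "c * (1 - t) * (1 - t) = (1 - t) ^ (m + k + 1)"
      using assms unfolding c_def by (cases m) (auto simp: power_add)
    finally show ?thesis using True by simp
  next
    case False
    then show ?thesis by simp
  qed
  finally show ?thesis .
qed

lemma C3: assumes "1 \<le> m"
  shows "(\<integral>\<^sup>+ t. indicator {0..} t * Qf m k 0 t \<partial>lborel) = ennreal (1 / (m+k+2))"
proof -
  have "(\<integral>\<^sup>+ t. indicator {0..} t * Qf m k 0 t \<partial>lborel) = (\<integral>\<^sup>+ t. ennreal ((1 - t) ^ (m + k + 1)) * indicator {0..1} t \<partial>lborel)"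
    using assms by (intro nn_integral_cong) (auto simp: Qf_t0 indicator_def)
  also have "\<dots> = ennreal ((\<lambda>s. - ((1 - s) ^ Suc (m + k + 1)) / real (Suc (m + k + 1))) 1 - (\<lambda>s. - ((1 - s) ^ Suc (m + k + 1)) / real (Suc (m + k + 1))) 0)"
  proof (rule nn_FTC)
    fix x :: real
    show "((\<lambda>s. - ((1 - s) ^ Suc (m + k + 1)) / real (Suc (m + k + 1))) has_real_derivative (1 - x) ^ (m + k + 1)) (at x)"
      by (rule derivative_eq_intros refl | simp)+
  qed auto
  also have "\<dots> = ennreal (1 / (m + k + 2))" by simp
  finally show ?thesis by simp
qed

lemma W_base: "(\<lambda>p::real\<times>real\<times>real\<times>real. ennreal (Wf m k (fst p) (fst (snd p)) (fst (snd (snd p))) (snd (snd (snd p))))) \<in> borel_measurable (borel \<Otimes>\<^sub>M borel \<Otimes>\<^sub>M borel \<Otimes>\<^sub>M borel)"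
  unfolding Wf_def lamf_def by measurable

lemma W_meas:
  assumes "g1 \<in> borel_measurable N" "g2 \<in> borel_measurable N" "g3 \<in> borel_measurable N" "g4 \<in> borel_measurable N"
  shows "(\<lambda>p. ennreal (Wf m k (g1 p) (g2 p) (g3 p) (g4 p))) \<in> borel_measurable N"
  using measurable_compose[OF measurable_Pair[OF assms(1) measurable_Pair[OF assms(2) measurable_Pair[OF assms(3) assms(4)]]] W_base[of m k]]
  by simp

lemma lamf_A: "0 \<le> t \<Longrightarrow> x < y - t \<Longrightarrow> lamf s t x y = s + t"
  unfolding lamf_def by (auto simp: max_def min_def)
lemma lamf_B1: "0 \<le> t \<Longrightarrow> y \<le> x \<Longrightarrow> s \<le> x - y \<Longrightarrow> lamf s t x y = s + t"
  unfolding lamf_def by (auto simp: max_def min_def)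
lemma lamf_B2: "0 \<le> t \<Longrightarrow> y \<le> x \<Longrightarrow> x - y \<le> s \<Longrightarrow> s \<le> x - y + t \<Longrightarrow> lamf s t x y = x - y + t"
  unfolding lamf_def by (auto simp: max_def min_def)
lemma lamf_B3: "0 \<le> t \<Longrightarrow> y \<le> x \<Longrightarrow> x - y + t \<le> s \<Longrightarrow> lamf s t x y = s"
  unfolding lamf_def by (auto simp: max_def min_def)

definition i1 :: "nat \<Rightarrow> real \<Rightarrow> real \<Rightarrow> real \<Rightarrow> real" where
  "i1 m t y x = (if x < y - t then ((1 - t) ^ m - (1 - t - x) ^ m) / m
     else if y \<le> x then ((1 - t) ^ m - (1 - x) ^ m) / m + t * (1 - x + y - t) ^ (m - 1) else 0)"

lemma I1_A:
  assumes "1 \<le> m" "0 \<le> t" "t < y" "y \<le> 1" "0 < x" "x < y - t"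
  shows "(\<integral>\<^sup>+ s. indicator {0..} s * ennreal (Wf m k s t x y) \<partial>lborel) = ennreal ((1 - t) ^ k * i1 m t y x)"
proof -
  have "(\<integral>\<^sup>+ s. indicator {0..} s * ennreal (Wf m k s t x y) \<partial>lborel) =
      (\<integral>\<^sup>+ s. ennreal ((1 - t) ^ k * (1 - t - s) ^ (m - 1)) * indicator {0..x} s \<partial>lborel)"
  proof (rule nn_integral_cong_AE)
    show "AE s in lborel. indicator {0..} s * ennreal (Wf m k s t x y) = ennreal ((1 - t) ^ k * (1 - t - s) ^ (m - 1)) * indicator {0..x} s"
      using AE_lborel_singleton[of x]
    proof eventually_elim
      case (elim s)
      then show ?case using assms
        by (auto simp: Wf_def lamf_A indicator_def mult.commute diff_diff_eq add.commute)
    qed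
  qed
  also have "\<dots> = ennreal ((\<lambda>s. - ((1 - t) ^ k * (1 - t - s) ^ m) / real m) x - (\<lambda>s. - ((1 - t) ^ k * (1 - t - s) ^ m) / real m) 0)"
  proof (rule nn_FTC)
    fix s :: real assume s: "0 \<le> s" "s \<le> x"
    show "((\<lambda>s. - ((1 - t) ^ k * (1 - t - s) ^ m) / real m) has_real_derivative (1 - t) ^ k * (1 - t - s) ^ (m - 1)) (at s)"
      using assms by (rule_tac derivative_eq_intros refl | simp)+
    show "0 \<le> (1 - t) ^ k * (1 - t - s) ^ (m - 1)" using assms s by simp
  qed (use assms in auto)
  also have "\<dots> = ennreal ((1 - t) ^ k * i1 m t y x)"
    using assms by (simp add: i1_def field_simps)
  finally show ?thesis .
qed

lemma I1_B:
  assumes "1 \<le> m" "0 \<le> t" "t < y" "y \<le> x" "x \<le> 1"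
  shows "(\<integral>\<^sup>+ s. indicator {0..} s * ennreal (Wf m k s t x y) \<partial>lborel) = ennreal ((1 - t) ^ k * i1 m t y x)"
proof -
  define f1 where "f1 s = (1 - t) ^ k * (1 - t - s) ^ (m - 1)" for s
  define f2 where "f2 s = (1 - t) ^ k * (1 - (x - y + t)) ^ (m - 1)" for s :: real
  define f3 where "f3 s = (1 - t) ^ k * (1 - s) ^ (m - 1)" for s
  define F1 where "F1 s = - ((1 - t) ^ k * (1 - t - s) ^ m) / real m" for s
  define F2 where "F2 s = (1 - t) ^ k * (1 - (x - y + t)) ^ (m - 1) * s" for s
  define F3 where "F3 s = - ((1 - t) ^ k * (1 - s) ^ m) / real m" for s
  have "(\<integral>\<^sup>+ s. indicator {0..} s * ennreal (Wf m k s t x y) \<partial>lborel) =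
      (\<integral>\<^sup>+ s. ennreal (f1 s) * indicator {0..x - y} s + (ennreal (f2 s) * indicator {x - y..x - y + t} s
         + ennreal (f3 s) * indicator {x - y + t..x} s) \<partial>lborel)"
  proof (rule nn_integral_cong_AE)
    show "AE s in lborel. indicator {0..} s * ennreal (Wf m k s t x y) = ennreal (f1 s) * indicator {0..x - y} s + (ennreal (f2 s) * indicator {x - y..x - y + t} s
         + ennreal (f3 s) * indicator {x - y + t..x} s)"
      using AE_lborel_singleton[of x] AE_lborel_singleton[of "x - y"] AE_lborel_singleton[of "x - y + t"] AE_lborel_singleton[of 0]
    proof eventually_elim
      case (elim s)
      consider "s < 0" | "0 < s" "s < x - y" | "x - y < s" "s < x - y + t" | "x - y + t < s" "s < x" | "x < s"
        using elim by linarith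
      then show ?case
      proof cases
        case 1 then show ?thesis using assms by (auto simp: indicator_def)
      next
        case 2
        then have "lamf s t x y = s + t" using assms by (intro lamf_B1) auto
        then show ?thesis using 2 assms by (simp add: Wf_def indicator_def f1_def mult.commute diff_diff_eq add.commute)
      next
        case 3
        then have "lamf s t x y = x - y + t" using assms by (intro lamf_B2) auto
        then show ?thesis using 3 assms by (simp add: Wf_def indicator_def f2_def mult.commute)
      next
        case 4
        then have "lamf s t x y = s" using assms by (intro lamf_B3) auto
        then show ?thesis using 4 assms by (simp add: Wf_def indicator_def f3_def mult.commute)
      next
        case 5 then show ?thesis using assms by (auto simp: indicator_def Wf_def)
      qed
    qed
  qed
  also have "\<dots> = (\<integral>\<^sup>+ s. ennreal (f1 s) * indicator {0..x - y} s \<partial>lborel) + ((\<integral>\<^sup>+ s. ennreal (f2 s) * indicator {x - y..x - y + t} s \<partial>lborel)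
         + (\<integral>\<^sup>+ s. ennreal (f3 s) * indicator {x - y + t..x} s \<partial>lborel))"
  proof -
    have m1: "(\<lambda>s. ennreal (f1 s) * indicator {0..x - y} s) \<in> borel_measurable lborel"
      unfolding f1_def by measurable
    have m2: "(\<lambda>s. ennreal (f2 s) * indicator {x - y..x - y + t} s) \<in> borel_measurable lborel"
      unfolding f2_def by measurable
    have m3: "(\<lambda>s. ennreal (f3 s) * indicator {x - y + t..x} s) \<in> borel_measurable lborel"
      unfolding f3_def by measurable
    show ?thesis using m1 m2 m3 by (simp add: nn_integral_add)
  qed
  also have "(\<integral>\<^sup>+ s. ennreal (f1 s) * indicator {0..x - y} s \<partial>lborel) =
      ennreal (F1 (x - y) - F1 0)"
  proof (rule nn_FTC)
    fix s :: real assume s: "0 \<le> s" "s \<le> x - y"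
    show "(F1 has_real_derivative f1 s) (at s)"
      unfolding f1_def F1_def using assms by (rule_tac derivative_eq_intros refl | simp)+
    show "0 \<le> f1 s" using assms s by (simp add: f1_def)
  qed (use assms in auto)
  also have "(\<integral>\<^sup>+ s. ennreal (f2 s) * indicator {x - y..x - y + t} s \<partial>lborel) =
      ennreal (F2 (x - y + t) - F2 (x - y))"
  proof (rule nn_FTC)
    fix s :: real assume s: "x - y \<le> s" "s \<le> x - y + t"
    show "(F2 has_real_derivative f2 s) (at s)"
      unfolding f2_def F2_def by (rule_tac derivative_eq_intros refl | simp)+
    show "0 \<le> f2 s" using assms s by (simp add: f2_def)
  qed (use assms in auto)
  also have "(\<integral>\<^sup>+ s. ennreal (f3 s) * indicator {x - y + t..x} s \<partial>lborel) =
      ennreal (F3 x - F3 (x - y + t))"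
  proof (rule nn_FTC)
    fix s :: real assume s: "x - y + t \<le> s" "s \<le> x"
    show "(F3 has_real_derivative f3 s) (at s)"
      unfolding f3_def F3_def using assms by (rule_tac derivative_eq_intros refl | simp)+
    show "0 \<le> f3 s" using assms s by (simp add: f3_def)
  qed (use assms in auto)
  also have "ennreal (F1 (x - y) - F1 0) + (ennreal (F2 (x - y + t) - F2 (x - y)) + ennreal (F3 x - F3 (x - y + t)))
      = ennreal ((1 - t) ^ k * i1 m t y x)"
  proof -
    have e1: "1 - t - (x - y) = 1 - (x - y + t)" by simp
    have n1: "(1 - (x - y + t)) ^ m \<le> (1 - t) ^ m" using assms by (intro power_mono) auto
    have n3: "(1 - x) ^ m \<le> (1 - (x - y + t)) ^ m" using assms by (intro power_mono) auto
    have p1: "0 \<le> F1 (x - y) - F1 0" using n1 assms unfolding F1_def e1 by (simp add: field_simps)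
    have p2: "0 \<le> F2 (x - y + t) - F2 (x - y)" using assms unfolding F2_def by (simp add: algebra_simps)
    have p3: "0 \<le> F3 x - F3 (x - y + t)" using n3 assms unfolding F3_def by (simp add: field_simps)
    have "F1 (x - y) - F1 0 + (F2 (x - y + t) - F2 (x - y)) + (F3 x - F3 (x - y + t)) = (1 - t) ^ k * i1 m t y x"
      using assms unfolding F1_def F2_def F3_def i1_def e1 by (simp add: field_simps)
    then show ?thesis using p1 p2 p3 by (simp add: ennreal_plus[symmetric] add.assoc del: ennreal_plus)
  qed
  finally show ?thesis .
qed

lemma I1_zero:
  assumes "0 \<le> t" "\<not> (0 < x \<and> x < y - t) \<and> \<not> (y \<le> x \<and> x \<le> 1)"
  shows "(\<integral>\<^sup>+ s. indicator {0..} s * ennreal (Wf m k s t x y) \<partial>lborel) = 0"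
proof -
  have "(\<lambda>s. indicator {0..} s * ennreal (Wf m k s t x y)) = (\<lambda>_. 0)"
    using assms by (auto simp: Wf_def indicator_def fun_eq_iff)
  then show ?thesis by simp
qed

definition V2 :: "nat \<Rightarrow> nat \<Rightarrow> real \<Rightarrow> real \<Rightarrow> real" where
  "V2 m k t y = (1 - t) ^ k * ((1 - t) ^ (m + 1) / (m + 1) + t * ((1 - t) ^ m - (y - t) ^ m) / m)"

lemma DERIV_pow_sub: "((\<lambda>x. (c - x) ^ n) has_real_derivative - (real n * (c - x) ^ (n - 1))) (at x)"
  by (rule derivative_eq_intros refl | simp)+

lemma DERIV_pow_sub2: "((\<lambda>x. (x - c) ^ n) has_real_derivative real n * (x - c) ^ (n - 1)) (at x)"
  by (rule derivative_eq_intros refl | simp)+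

lemma I2:
  assumes "1 \<le> m" "0 \<le> t" "t < y" "y \<le> 1"
  shows "(\<integral>\<^sup>+ x. (\<integral>\<^sup>+ s. indicator {0..} s * ennreal (Wf m k s t x y) \<partial>lborel) \<partial>lborel) = ennreal (V2 m k t y)"
proof -
  define a where "a = real m"
  define b where "b = real m + 1"
  have a0: "0 < a" using assms by (simp add: a_def)
  have b0: "0 < b" by (simp add: b_def)
  have ab: "b = a + 1" by (simp add: a_def b_def)
  have rb: "real (m + 1) = b" by (simp add: b_def)
  define A where "A = (1 - t) ^ k"
  have A0: "0 \<le> A" using assms by (simp add: A_def)
  define g1 where "g1 x = A * (((1 - t) ^ m - (1 - t - x) ^ m) / a)" for x
  define g2 where "g2 x = A * (((1 - t) ^ m - (1 - x) ^ m) / a + t * (1 - x + y - t) ^ (m - 1))" for x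
  define G1 where "G1 x = A / a * ((1 - t) ^ m * x) + A / (a * b) * (1 - t - x) ^ (m + 1)" for x
  define G2 where "G2 x = A / a * ((1 - t) ^ m * x) + A / (a * b) * (1 - x) ^ (m + 1)
     - t * A / a * ((1 - t + y) - x) ^ m" for x
  have dG1: "(G1 has_real_derivative g1 x) (at x)" for x
  proof -
    have d: "(G1 has_real_derivative A / a * ((1 - t) ^ m * 1) + A / (a * b) * (- (real (m + 1) * (1 - t - x) ^ (m + 1 - 1)))) (at x)"
      unfolding G1_def[abs_def] by (intro DERIV_add DERIV_cmult DERIV_pow_sub DERIV_ident)
    have e: "A / a * ((1 - t) ^ m * 1) + A / (a * b) * (- (real (m + 1) * (1 - t - x) ^ (m + 1 - 1))) = g1 x"
      using a0 b0 unfolding g1_def rb by (simp add: field_simps)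
    show ?thesis using d unfolding e .
  qed
  have ng1: "0 \<le> g1 x" if x: "0 \<le> x" "x \<le> y - t" for x
  proof -
    have "(1 - t - x) ^ m \<le> (1 - t) ^ m" using assms x by (intro power_mono) auto
    then show "0 \<le> g1 x" using A0 a0 by (simp add: g1_def)
  qed
  have dG2: "(G2 has_real_derivative g2 x) (at x)" for x
  proof -
    have d: "(G2 has_real_derivative A / a * ((1 - t) ^ m * 1) + A / (a * b) * (- (real (m + 1) * (1 - x) ^ (m + 1 - 1)))
        - t * A / a * (- (real m * ((1 - t + y) - x) ^ (m - 1)))) (at x)"
      unfolding G2_def[abs_def] by (intro DERIV_add DERIV_diff DERIV_cmult DERIV_pow_sub DERIV_ident)
    have e: "A / a * ((1 - t) ^ m * 1) + A / (a * b) * (- (real (m + 1) * (1 - x) ^ (m + 1 - 1)))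
        - t * A / a * (- (real m * ((1 - t + y) - x) ^ (m - 1))) = g2 x"
      using a0 b0 unfolding g2_def rb a_def[symmetric] by (simp add: field_simps)
    show ?thesis using d unfolding e .
  qed
  have ng2: "0 \<le> g2 x" if x: "y \<le> x" "x \<le> 1" for x
  proof -
    have "(1 - x) ^ m \<le> (1 - t) ^ m" using assms x by (intro power_mono) auto
    then show "0 \<le> g2 x" using assms x A0 a0 by (simp add: g2_def)
  qed
  have p1: "0 \<le> G1 (y - t) - G1 0" using assms by (intro FTC_nonneg[of 0 "y - t" G1 g1] dG1 ng1) auto
  have p2: "0 \<le> G2 1 - G2 y" using assms by (intro FTC_nonneg[of y 1 G2 g2] dG2 ng2) auto
  have "(\<integral>\<^sup>+ x. (\<integral>\<^sup>+ s. indicator {0..} s * ennreal (Wf m k s t x y) \<partial>lborel) \<partial>lborel) =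
      (\<integral>\<^sup>+ x. ennreal (g1 x) * indicator {0..y - t} x + ennreal (g2 x) * indicator {y..1} x \<partial>lborel)"
  proof (rule nn_integral_cong_AE)
    show "AE x in lborel. (\<integral>\<^sup>+ s. indicator {0..} s * ennreal (Wf m k s t x y) \<partial>lborel) =
        ennreal (g1 x) * indicator {0..y - t} x + ennreal (g2 x) * indicator {y..1} x"
      using AE_lborel_singleton[of 0] AE_lborel_singleton[of "y - t"] AE_lborel_singleton[of y] AE_lborel_singleton[of 1]
    proof eventually_elim
      case (elim x)
      consider "0 < x \<and> x < y - t" | "y < x \<and> x < 1" | "\<not> (0 < x \<and> x < y - t) \<and> \<not> (y \<le> x \<and> x \<le> 1)"
        using elim by linarith
      then show ?case
      proof cases
        case 1
        then show ?thesis using I1_A[of m t y x k] assms by (simp add: i1_def g1_def A_def a_def indicator_def)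
      next
        case 2
        then show ?thesis using I1_B[of m t y x k] assms by (simp add: i1_def g2_def A_def a_def indicator_def)
      next
        case 3
        then show ?thesis using I1_zero[of t x y m k] assms elim by (auto simp: indicator_def)
      qed
    qed
  qed
  also have "\<dots> = (\<integral>\<^sup>+ x. ennreal (g1 x) * indicator {0..y - t} x \<partial>lborel) + (\<integral>\<^sup>+ x. ennreal (g2 x) * indicator {y..1} x \<partial>lborel)"
  proof -
    have m1: "(\<lambda>s. ennreal (g1 s) * indicator {0..y - t} s) \<in> borel_measurable lborel"
      unfolding g1_def by measurable
    have m2: "(\<lambda>s. ennreal (g2 s) * indicator {y..1} s) \<in> borel_measurable lborel"
      unfolding g2_def by measurable
    show ?thesis using m1 m2 by (simp add: nn_integral_add)
  qed
  also have "(\<integral>\<^sup>+ x. ennreal (g1 x) * indicator {0..y - t} x \<partial>lborel) = ennreal (G1 (y - t) - G1 0)"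
    using assms by (intro nn_FTC[of 0 "y - t" G1 g1] dG1 ng1) auto
  also have "(\<integral>\<^sup>+ x. ennreal (g2 x) * indicator {y..1} x \<partial>lborel) = ennreal (G2 1 - G2 y)"
    using assms by (intro nn_FTC[of y 1 G2 g2] dG2 ng2) auto
  also have "ennreal (G1 (y - t) - G1 0) + ennreal (G2 1 - G2 y) = ennreal (V2 m k t y)"
  proof -
    have pw: "(1 - t) ^ (m + 1) = (1 - t) * (1 - t) ^ m" by simp
    have V: "V2 m k t y = A * ((1 - t) * (1 - t) ^ m / b + t * ((1 - t) ^ m - (y - t) ^ m) / a)"
      by (simp add: V2_def A_def a_def b_def)
    have "G1 (y - t) - G1 0 + (G2 1 - G2 y) = V2 m k t y"
      unfolding V G1_def G2_def using a0 b0 assms apply (simp add: pw field_simps)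
      apply (simp add: ab algebra_simps)
      done
    then show ?thesis using p1 p2 by (simp add: ennreal_plus[symmetric] del: ennreal_plus)
  qed
  finally show ?thesis .
qed

lemma I3:
  assumes "1 \<le> m" "0 \<le> t" "t < 1"
  shows "(\<integral>\<^sup>+ y. (\<integral>\<^sup>+ x. (\<integral>\<^sup>+ s. indicator {0..} s * ennreal (Wf m k s t x y) \<partial>lborel) \<partial>lborel) \<partial>lborel)
     = ennreal ((1 - t) ^ (m + k + 1) / (m + 1))"
proof -
  define a where "a = real m"
  define b where "b = real m + 1"
  have a0: "0 < a" using assms by (simp add: a_def)
  have b0: "0 < b" by (simp add: b_def)
  have ab: "b = a + 1" by (simp add: a_def b_def)
  have rb: "real (m + 1) = b" by (simp add: b_def)
  define A where "A = (1 - t) ^ k"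
  have A0: "0 \<le> A" using assms by (simp add: A_def)
  define H where "H y = A * ((1 - t) ^ (m + 1) / b * y) + A * (t / a) * ((1 - t) ^ m * y) - A * (t / a) / b * (y - t) ^ (m + 1)" for y
  have V: "V2 m k t y = A * ((1 - t) ^ (m + 1) / b + t * ((1 - t) ^ m - (y - t) ^ m) / a)" for y
    by (simp add: V2_def A_def a_def b_def)
  have dH: "(H has_real_derivative V2 m k t y) (at y)" for y
  proof -
    have d: "(H has_real_derivative A * ((1 - t) ^ (m + 1) / b * 1) + A * (t / a) * ((1 - t) ^ m * 1) - A * (t / a) / b * (real (m + 1) * (y - t) ^ (m + 1 - 1))) (at y)"
      unfolding H_def[abs_def] by (intro DERIV_add DERIV_diff DERIV_cmult DERIV_ident DERIV_pow_sub2)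
    have e: "A * ((1 - t) ^ (m + 1) / b * 1) + A * (t / a) * ((1 - t) ^ m * 1) - A * (t / a) / b * (real (m + 1) * (y - t) ^ (m + 1 - 1)) = V2 m k t y"
      unfolding V rb using a0 b0 by (simp add: field_simps)
    show ?thesis using d unfolding e .
  qed
  have nV: "0 \<le> V2 m k t y" if "t \<le> y" "y \<le> 1" for y
  proof -
    have "(y - t) ^ m \<le> (1 - t) ^ m" using assms that by (intro power_mono) auto
    then show ?thesis unfolding V using A0 a0 b0 assms by (auto intro!: mult_nonneg_nonneg add_nonneg_nonneg divide_nonneg_pos)
  qed
  have "(\<integral>\<^sup>+ y. (\<integral>\<^sup>+ x. (\<integral>\<^sup>+ s. indicator {0..} s * ennreal (Wf m k s t x y) \<partial>lborel) \<partial>lborel) \<partial>lborel)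
      = (\<integral>\<^sup>+ y. ennreal (V2 m k t y) * indicator {t..1} y \<partial>lborel)"
  proof (rule nn_integral_cong_AE)
    show "AE y in lborel. (\<integral>\<^sup>+ x. (\<integral>\<^sup>+ s. indicator {0..} s * ennreal (Wf m k s t x y) \<partial>lborel) \<partial>lborel) = ennreal (V2 m k t y) * indicator {t..1} y"
      using AE_lborel_singleton[of t]
    proof eventually_elim
      case (elim y)
      show ?case
      proof (cases "t < y \<and> y \<le> 1")
        case True
        then show ?thesis using I2[of m t y k] assms by simp
      next
        case False
        then have "(\<lambda>x. \<integral>\<^sup>+ s. indicator {0..} s * ennreal (Wf m k s t x y) \<partial>lborel) = (\<lambda>_. 0)"
          by (auto simp: Wf_def fun_eq_iff)
        then show ?thesis using False elim by (auto simp: indicator_def)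
      qed
    qed
  qed
  also have "\<dots> = ennreal (H 1 - H t)"
    using assms by (intro nn_FTC[of t 1 H "V2 m k t"] dH nV) auto
  also have "H 1 - H t = (1 - t) ^ (m + k + 1) / (m + 1)"
  proof -
    have pw: "(1 - t) ^ (m + 1) = (1 - t) * (1 - t) ^ m" by simp
    have pw2: "(1 - t) ^ (m + k + 1) / (m + 1) = A * ((1 - t) * (1 - t) ^ m) / b" by (simp add: A_def b_def power_add mult_ac add_ac)
    have "H 1 - H t = A * ((1 - t) * (1 - t) ^ m) / b"
      unfolding H_def using a0 b0 apply (simp add: pw field_simps)
      apply (simp add: ab algebra_simps)
      done
    then show ?thesis unfolding pw2 .
  qed
  finally show ?thesis .
qed

lemma Qf_meas: "(\<lambda>p. Qf m k (fst p) (snd p)) \<in> borel_measurable (lborel \<Otimes>\<^sub>M lborel)"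
proof -
  have w: "(\<lambda>q. ennreal (Wf m k (fst (fst (fst q))) (snd (fst (fst q))) (snd q) (snd (fst q)))) \<in> borel_measurable (((lborel \<Otimes>\<^sub>M lborel) \<Otimes>\<^sub>M lborel) \<Otimes>\<^sub>M lborel)"
    by (rule W_meas) measurable
  have "(\<lambda>q. \<integral>\<^sup>+ x. ennreal (Wf m k (fst (fst q)) (snd (fst q)) x (snd q)) \<partial>lborel) \<in> borel_measurable ((lborel \<Otimes>\<^sub>M lborel) \<Otimes>\<^sub>M lborel)"
    using lborel.borel_measurable_nn_integral[of "\<lambda>q x. ennreal (Wf m k (fst (fst q)) (snd (fst q)) x (snd q))" "(lborel \<Otimes>\<^sub>M lborel) \<Otimes>\<^sub>M lborel"] w
    by (simp add: case_prod_unfold)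
  then have "(\<lambda>p. \<integral>\<^sup>+ y. \<integral>\<^sup>+ x. ennreal (Wf m k (fst p) (snd p) x y) \<partial>lborel \<partial>lborel) \<in> borel_measurable (lborel \<Otimes>\<^sub>M lborel)"
    using lborel.borel_measurable_nn_integral[of "\<lambda>p y. \<integral>\<^sup>+ x. ennreal (Wf m k (fst p) (snd p) x y) \<partial>lborel" "lborel \<Otimes>\<^sub>M lborel"]
    by (simp add: case_prod_unfold)
  then show ?thesis unfolding Qf_def .
qed

lemma C1: assumes "1 \<le> m"
  shows "(\<integral>\<^sup>+ s. indicator {0..} s * (\<integral>\<^sup>+ t. indicator {0..} t * Qf m k s t \<partial>lborel) \<partial>lborel)
     = ennreal (1 / ((m+1) * (m+k+2)))"
proof -
  have "(\<integral>\<^sup>+ s. indicator {0..} s * (\<integral>\<^sup>+ t. indicator {0..} t * Qf m k s t \<partial>lborel) \<partial>lborel)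
      = (\<integral>\<^sup>+ s. \<integral>\<^sup>+ t. indicator {0..} s * (indicator {0..} t * Qf m k s t) \<partial>lborel \<partial>lborel)"
  proof (rule nn_integral_cong)
    fix s :: real
    show "indicator {0..} s * (\<integral>\<^sup>+ t. indicator {0..} t * Qf m k s t \<partial>lborel) = (\<integral>\<^sup>+ t. indicator {0..} s * (indicator {0..} t * Qf m k s t) \<partial>lborel)"
      by (cases "0 \<le> s") auto
  qed
  also have "\<dots> = (\<integral>\<^sup>+ t. \<integral>\<^sup>+ s. indicator {0..} s * (indicator {0..} t * Qf m k s t) \<partial>lborel \<partial>lborel)"
  proof (rule lborel_pair.Fubini'[symmetric])
    show "case_prod (\<lambda>s t. indicator {0..} s * (indicator {0..} t * Qf m k s t) :: ennreal) \<in> borel_measurable (lborel \<Otimes>\<^sub>M lborel)"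
      using Qf_meas[of m k] unfolding case_prod_unfold by measurable
  qed
  also have "\<dots> = (\<integral>\<^sup>+ t. ennreal ((1 - t) ^ (m + k + 1) / (m + 1)) * indicator {0..1} t \<partial>lborel)"
  proof (rule nn_integral_cong)
    fix t :: real
    show "(\<integral>\<^sup>+ s. indicator {0..} s * (indicator {0..} t * Qf m k s t) \<partial>lborel) = ennreal ((1 - t) ^ (m + k + 1) / (m + 1)) * indicator {0..1} t"
    proof (cases "0 \<le> t \<and> t < 1")
      case True
      have "(\<integral>\<^sup>+ s. indicator {0..} s * (indicator {0..} t * Qf m k s t) \<partial>lborel) =
          (\<integral>\<^sup>+ s. \<integral>\<^sup>+ y. \<integral>\<^sup>+ x. indicator {0..} s * ennreal (Wf m k s t x y) \<partial>lborel \<partial>lborel \<partial>lborel)"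
      proof (rule nn_integral_cong)
        fix s :: real
        show "indicator {0..} s * (indicator {0..} t * Qf m k s t) = (\<integral>\<^sup>+ y. \<integral>\<^sup>+ x. indicator {0..} s * ennreal (Wf m k s t x y) \<partial>lborel \<partial>lborel)"
          using True by (cases "0 \<le> s") (auto simp: Qf_def)
      qed
      also have "\<dots> = (\<integral>\<^sup>+ y. \<integral>\<^sup>+ s. \<integral>\<^sup>+ x. indicator {0..} s * ennreal (Wf m k s t x y) \<partial>lborel \<partial>lborel \<partial>lborel)"
      proof (rule lborel_pair.Fubini'[symmetric])
        have w: "(\<lambda>q. indicator {0..} (fst (fst q)) * ennreal (Wf m k (fst (fst q)) t (snd q) (snd (fst q)))) \<in> borel_measurable ((lborel \<Otimes>\<^sub>M lborel) \<Otimes>\<^sub>M lborel)"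
          by (intro borel_measurable_times_ennreal W_meas) measurable
        show "case_prod (\<lambda>s y. \<integral>\<^sup>+ x. indicator {0..} s * ennreal (Wf m k s t x y) \<partial>lborel) \<in> borel_measurable (lborel \<Otimes>\<^sub>M lborel)"
          using lborel.borel_measurable_nn_integral[of "\<lambda>q x. indicator {0..} (fst q) * ennreal (Wf m k (fst q) t x (snd q))" "lborel \<Otimes>\<^sub>M lborel"] w
          by (simp add: case_prod_unfold)
      qed
      also have "\<dots> = (\<integral>\<^sup>+ y. \<integral>\<^sup>+ x. \<integral>\<^sup>+ s. indicator {0..} s * ennreal (Wf m k s t x y) \<partial>lborel \<partial>lborel \<partial>lborel)"
      proof (rule nn_integral_cong)
        fix y :: real
        show "(\<integral>\<^sup>+ s. \<integral>\<^sup>+ x. indicator {0..} s * ennreal (Wf m k s t x y) \<partial>lborel \<partial>lborel) = (\<integral>\<^sup>+ x. \<integral>\<^sup>+ s. indicator {0..} s * ennreal (Wf m k s t x y) \<partial>lborel \<partial>lborel)"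
        proof (rule lborel_pair.Fubini'[symmetric])
          show "case_prod (\<lambda>s x. indicator {0..} s * ennreal (Wf m k s t x y)) \<in> borel_measurable (lborel \<Otimes>\<^sub>M lborel)"
            unfolding case_prod_unfold by (intro borel_measurable_times_ennreal W_meas) measurable
        qed
      qed
      also have "\<dots> = ennreal ((1 - t) ^ (m + k + 1) / (m + 1))"
        using I3[of m t k] assms True by simp
      finally show ?thesis using True by simp
    next
      case False
      show ?thesis
      proof (cases "t < 0")
        case True then show ?thesis by simp
      next
        case f2: False
        then have t1: "1 \<le> t" using False by auto
        have "Qf m k s t = 0" for s
        proof -
          have "Wf m k s t x y = 0" for x y using t1 by (simp add: Wf_def)
          then show ?thesis unfolding Qf_def by simp
        qed
        then show ?thesis using t1 by (auto simp: indicator_def)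
      qed
    qed
  qed
  also have "\<dots> = ennreal ((\<lambda>s. - ((1 - s) ^ Suc (m + k + 1)) / (real (Suc (m + k + 1)) * (m + 1))) 1 - (\<lambda>s. - ((1 - s) ^ Suc (m + k + 1)) / (real (Suc (m + k + 1)) * (m + 1))) 0)"
  proof (rule nn_FTC)
    fix x :: real
    show "((\<lambda>s. - ((1 - s) ^ Suc (m + k + 1)) / (real (Suc (m + k + 1)) * (m + 1))) has_real_derivative (1 - x) ^ (m + k + 1) / (m + 1)) (at x)"
      by (rule derivative_eq_intros refl | simp)+
  qed auto
  also have "\<dots> = ennreal (1 / ((m+1) * (m+k+2)))" by (simp add: algebra_simps)
  finally show ?thesis by (simp add: algebra_simps)
qed



lemma UU_prob: "prob_space UU"
  unfolding UU_def by (rule prob_space_uniform_measure) auto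

lemma emeasure_UU_compl:
  assumes "A \<subseteq> {0<..1}" "A \<in> sets borel" "emeasure lborel A = ennreal a" "0 \<le> a"
  shows "emeasure UU (- A) = ennreal (1 - a)" "a \<le> 1"
proof -
  have "emeasure lborel A \<le> emeasure lborel {0<..1::real}"
    using assms by (intro emeasure_mono) auto
  then show a1: "a \<le> 1" using assms by simp
  have h: "(1::ennreal) - ennreal a = ennreal (1 - a)" using ennreal_minus[of a 1] assms by simp
  have "emeasure UU (- A) = emeasure lborel ({0<..1} \<inter> - A) / emeasure lborel {0<..1::real}"
    unfolding UU_def using assms by (subst emeasure_uniform_measure) auto
  also have "{0<..1} \<inter> - A = {0<..1} - A" by auto
  also have "emeasure lborel ({0<..1::real} - A) = emeasure lborel {0<..1::real} - emeasure lborel A"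
    using assms by (intro emeasure_Diff) auto
  also have "emeasure lborel {0<..1::real} = 1" by simp
  finally show "emeasure UU (- A) = ennreal (1 - a)"
    using assms h by (simp add: divide_ennreal_def)
qed

lemma emeasure_Ico_union:
  assumes "a1 \<le> b1" "a2 \<le> b2"
  shows "emeasure lborel ({a1..<b1} \<union> {a2..<b2::real}) = ennreal (b1 - a1 + (b2 - a2) - max 0 (min b1 b2 - max a1 a2))"
proof -
  define d where "d = max 0 (min b1 b2 - max a1 a2)"
  have d0: "0 \<le> d" by (simp add: d_def)
  have int: "{a1..<b1} \<inter> {a2..<b2} = {max a1 a2..<min b1 b2}" by auto
  have ov: "emeasure lborel ({a1..<b1} \<inter> {a2..<b2::real}) = ennreal d"
  proof (cases "max a1 a2 \<le> min b1 b2")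
    case True
    have "d = min b1 b2 - max a1 a2" using True by (simp add: d_def)
    then show ?thesis unfolding int using emeasure_lborel_Ico[OF True] by simp
  next
    case False then have e: "{a1..<b1} \<inter> {a2..<b2} = {}" by auto
    have "d = 0" using False by (auto simp: d_def max_def min_def)
    then show ?thesis unfolding e by simp
  qed
  have fin: "emeasure lborel ({a1..<b1} \<union> {a2..<b2::real}) < \<infinity>"
  proof -
    have "emeasure lborel ({a1..<b1} \<union> {a2..<b2::real}) \<le> emeasure lborel {a1..<b1} + emeasure lborel {a2..<b2::real}"
      by (rule emeasure_subadditive) auto
    also have "\<dots> < \<infinity>" using assms by simp
    finally show ?thesis .
  qed
  then obtain e where e: "emeasure lborel ({a1..<b1} \<union> {a2..<b2::real}) = ennreal e" "0 \<le> e"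
    by (cases "emeasure lborel ({a1..<b1} \<union> {a2..<b2::real})") auto
  have "emeasure lborel {a1..<b1} + emeasure lborel {a2..<b2} = emeasure lborel ({a1..<b1} \<union> {a2..<b2::real}) + emeasure lborel ({a1..<b1} \<inter> {a2..<b2::real})"
    by (rule emeasure_Un_Int) auto
  then have "ennreal (b1 - a1) + ennreal (b2 - a2) = ennreal e + ennreal d"
    using assms e ov by simp
  then have "ennreal (b1 - a1 + (b2 - a2)) = ennreal (e + d)"
    using assms e d0 by (simp add: ennreal_plus)
  then have "b1 - a1 + (b2 - a2) = e + d"
    using assms e d0 by (subst (asm) ennreal_inj) auto
  then show ?thesis using e unfolding d_def[symmetric] by simp
qed

definition Cf :: "real \<Rightarrow> real \<Rightarrow> real \<Rightarrow> real \<Rightarrow> ennreal" where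
  "Cf s t x y = (if s < x \<and> t < y \<and> \<not> (y - t \<le> x \<and> x < y) then 1 else 0)"

definition Gf :: "nat \<Rightarrow> real \<Rightarrow> real \<Rightarrow> real \<Rightarrow> real \<Rightarrow> nat \<Rightarrow> real \<Rightarrow> ennreal" where
  "Gf m s t x y j v = (if (j < m \<longrightarrow> \<not> (x - s \<le> v \<and> v < x)) \<and> \<not> (y - t \<le> v \<and> v < y) then 1 else 0)"

lemma prod_if01:
  assumes "finite K"
  shows "(\<Prod>j\<in>K. if P j then 1 else 0 :: ennreal) = (if \<forall>j\<in>K. P j then 1 else 0)"
  using assms by (induction K rule: finite_induct) auto

lemma Am_factor:
  assumes "1 \<le> m" "m < l"
  shows "indicator {x. Am m s x \<and> Am l t x} x =
    Cf s t (x m) (x l) * (\<Prod>j\<in>{1..l} - {m, l}. Gf m s t (x m) (x l) j (x j))"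
proof -
  have "(\<Prod>j\<in>{1..l} - {m, l}. Gf m s t (x m) (x l) j (x j)) =
     (if \<forall>j\<in>{1..l} - {m, l}. (j < m \<longrightarrow> \<not> (x m - s \<le> x j \<and> x j < x m)) \<and> \<not> (x l - t \<le> x j \<and> x j < x l) then 1 else 0)"
    unfolding Gf_def by (rule prod_if01) simp
  moreover have "(Am m s x \<and> Am l t x) \<longleftrightarrow> (s < x m \<and> t < x l \<and> \<not> (x l - t \<le> x m \<and> x m < x l)) \<and>
      (\<forall>j\<in>{1..l} - {m, l}. (j < m \<longrightarrow> \<not> (x m - s \<le> x j \<and> x j < x m)) \<and> \<not> (x l - t \<le> x j \<and> x j < x l))"
    using assms unfolding Am_def by (auto; (metis atLeastLessThan_iff le_trans less_imp_le_nat nat_less_le)?)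
  ultimately show ?thesis unfolding Cf_def by (auto simp: indicator_def)
qed

lemma sets_UU: "sets UU = sets borel"
  by (simp add: UU_def)

lemma PiM_UU_meas: "borel_measurable (PiM I (\<lambda>_. UU)) = borel_measurable (PiM I (\<lambda>_. borel))"
  by (rule measurable_cong_sets) (auto intro!: sets_PiM_cong simp: sets_UU)

lemma UU_nn: "f \<in> borel_measurable borel \<Longrightarrow> (\<integral>\<^sup>+ x. f x \<partial>UU) = (\<integral>\<^sup>+ x. f x * indicator {0<..1} x \<partial>lborel)"
  unfolding UU_def by (subst nn_integral_uniform_measure) (auto simp: divide_ennreal_def)

lemma AE_UU: "AE x in UU. 0 < x \<and> x \<le> 1"
  unfolding UU_def by (rule AE_uniform_measureI) auto

lemma Cf_meas:
  assumes fa: "fa \<in> borel_measurable N" and fb: "fb \<in> borel_measurable N"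
  shows "(\<lambda>x. Cf s t (fa x) (fb x)) \<in> borel_measurable N"
proof -
  have "(\<lambda>x. Cf s t (fa x) (fb x)) = (\<lambda>x. indicator {p. s < fst p \<and> t < snd p \<and> \<not> (snd p - t \<le> fst p \<and> fst p < snd p)} (fa x, fb x))"
    by (auto simp: Cf_def fun_eq_iff)
  moreover have "Measurable.pred (borel \<Otimes>\<^sub>M borel) (\<lambda>p::real\<times>real. s < fst p \<and> t < snd p \<and> \<not> (snd p - t \<le> fst p \<and> fst p < snd p))"
    by measurable
  then have "{p::real\<times>real. s < fst p \<and> t < snd p \<and> \<not> (snd p - t \<le> fst p \<and> fst p < snd p)} \<in> sets (borel \<Otimes>\<^sub>M borel)"
    unfolding Measurable.pred_def by (simp add: space_pair_measure)
  ultimately show ?thesis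
    using measurable_Pair[OF fa fb] by (auto intro: measurable_compose[OF _ borel_measurable_indicator])
qed

lemma Gf_meas:
  assumes fa: "fa \<in> borel_measurable N" and fb: "fb \<in> borel_measurable N" and fv: "fv \<in> borel_measurable N"
  shows "(\<lambda>x. Gf m s t (fa x) (fb x) j (fv x)) \<in> borel_measurable N"
proof -
  have "(\<lambda>x. Gf m s t (fa x) (fb x) j (fv x)) = (\<lambda>x. indicator {p. (j < m \<longrightarrow> \<not> (fst p - s \<le> snd (snd p) \<and> snd (snd p) < fst p)) \<and> \<not> (fst (snd p) - t \<le> snd (snd p) \<and> snd (snd p) < fst (snd p))} (fa x, fb x, fv x))"
    by (auto simp: Gf_def fun_eq_iff)
  moreover have "Measurable.pred (borel \<Otimes>\<^sub>M borel \<Otimes>\<^sub>M borel) (\<lambda>p::real\<times>real\<times>real. (j < m \<longrightarrow> \<not> (fst p - s \<le> snd (snd p) \<and> snd (snd p) < fst p)) \<and> \<not> (fst (snd p) - t \<le> snd (snd p) \<and> snd (snd p) < fst (snd p)))"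
    by measurable
  then have "{p::real\<times>real\<times>real. (j < m \<longrightarrow> \<not> (fst p - s \<le> snd (snd p) \<and> snd (snd p) < fst p)) \<and> \<not> (fst (snd p) - t \<le> snd (snd p) \<and> snd (snd p) < fst (snd p))} \<in> sets (borel \<Otimes>\<^sub>M borel \<Otimes>\<^sub>M borel)"
    unfolding Measurable.pred_def by (simp add: space_pair_measure)
  ultimately show ?thesis
    using measurable_Pair[OF fa measurable_Pair[OF fb fv]] by (auto intro: measurable_compose[OF _ borel_measurable_indicator])
qed
lemma meas_F:
  assumes "K \<subseteq> I" and fa: "fa \<in> borel_measurable (PiM I (\<lambda>_. borel))"
    and fb: "fb \<in> borel_measurable (PiM I (\<lambda>_. borel))"
  shows "(\<lambda>x. Cf s t (fa x) (fb x) * (\<Prod>j\<in>K. Gf m s t (fa x) (fb x) j (x j))) \<in> borel_measurable (PiM I (\<lambda>_. UU))"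
  unfolding PiM_UU_meas
proof (intro borel_measurable_times_ennreal borel_measurable_prod_ennreal)
  show "(\<lambda>x. Cf s t (fa x) (fb x)) \<in> borel_measurable (PiM I (\<lambda>_. borel))"
    using fa fb by (rule Cf_meas)
  fix j assume "j \<in> K"
  then have "j \<in> I" using assms by auto
  then have "(\<lambda>x. x j) \<in> borel_measurable (PiM I (\<lambda>_. borel))"
    by (rule measurable_component_singleton)
  then show "(\<lambda>x. Gf m s t (fa x) (fb x) j (x j)) \<in> borel_measurable (PiM I (\<lambda>_. borel))"
    using fa fb by (intro Gf_meas)
qed

lemma comp_meas: "j \<in> I \<Longrightarrow> (\<lambda>x. x j) \<in> borel_measurable (PiM I (\<lambda>_. borel))"
  by (rule measurable_component_singleton)

lemma lamf_nonneg: "0 \<le> s \<Longrightarrow> 0 \<le> t \<Longrightarrow> 0 \<le> lamf s t x y"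
  unfolding lamf_def by (auto simp: max_def min_def)

lemma Gf_int:
  assumes "0 \<le> s" "0 \<le> t" "s < x" "x \<le> 1" "t < y" "y \<le> 1"
  shows "(\<integral>\<^sup>+ v. Gf m s t x y j v \<partial>UU) = ennreal (if j < m then 1 - lamf s t x y else 1 - t)"
    "lamf s t x y \<le> 1"
proof -
  have U: "emeasure lborel ({x - s..<x} \<union> {y - t..<y}) = ennreal (lamf s t x y)"
    using assms emeasure_Ico_union[of "x - s" x "y - t" y] by (simp add: lamf_def)
  have sub: "{x - s..<x} \<union> {y - t..<y} \<subseteq> {0<..1}" using assms by auto
  note c1 = emeasure_UU_compl[OF sub _ U lamf_nonneg[OF assms(1,2)]]
  show "lamf s t x y \<le> 1" using c1 by simp
  have U2: "emeasure lborel {y - t..<y} = ennreal t" using assms by simp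
  have sub2: "{y - t..<y} \<subseteq> {0<..1}" using assms by auto
  note c2 = emeasure_UU_compl[OF sub2 _ U2 assms(2)]
  show "(\<integral>\<^sup>+ v. Gf m s t x y j v \<partial>UU) = ennreal (if j < m then 1 - lamf s t x y else 1 - t)"
  proof (cases "j < m")
    case True
    then have "Gf m s t x y j = indicator (- ({x - s..<x} \<union> {y - t..<y}))"
      by (auto simp: Gf_def fun_eq_iff indicator_def)
    then show ?thesis using True c1 by (simp add: sets_UU)
  next
    case False
    then have "Gf m s t x y j = indicator (- {y - t..<y})"
      by (auto simp: Gf_def fun_eq_iff indicator_def)
    then show ?thesis using False c2 by (simp add: sets_UU)
  qed
qed

lemma prod_if_card:
  assumes "finite K"
  shows "(\<Prod>j\<in>K. if j < m then a else b) = a ^ card {j\<in>K. j < m} * (b::real) ^ card {j\<in>K. \<not> j < m}"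
proof -
  have "(\<Prod>j\<in>K. if j < m then a else b) = (\<Prod>j\<in>K \<inter> {j. j < m}. a) * (\<Prod>j\<in>K \<inter> - {j. j < m}. b)"
    using assms by (rule prod.If_cases)
  also have "\<dots> = a ^ card {j\<in>K. j < m} * b ^ card {j\<in>K. \<not> j < m}"
    by (simp add: Int_def)
  finally show ?thesis .
qed

lemma PW:
  assumes "1 \<le> m" "m < l" "0 \<le> s" "0 \<le> t" "0 < x" "x \<le> 1" "0 < y" "y \<le> 1"
  shows "Cf s t x y * (\<Prod>j\<in>{1..l} - {m, l}. \<integral>\<^sup>+ v. Gf m s t x y j v \<partial>UU) = ennreal (Wf m (l - m - 1) s t x y)"
proof (cases "s < x \<and> t < y \<and> \<not> (y - t \<le> x \<and> x < y)")
  case False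
  then show ?thesis by (auto simp: Cf_def Wf_def)
next
  case True
  let ?K = "{1..l} - {m, l}"
  have l1: "lamf s t x y \<le> 1" using Gf_int(2)[of s t x y] assms True by auto
  have "(\<Prod>j\<in>?K. \<integral>\<^sup>+ v. Gf m s t x y j v \<partial>UU) = (\<Prod>j\<in>?K. ennreal (if j < m then 1 - lamf s t x y else 1 - t))"
    using Gf_int(1)[of s t x y] assms True by (intro prod.cong) auto
  also have "\<dots> = ennreal (\<Prod>j\<in>?K. if j < m then 1 - lamf s t x y else 1 - t)"
    using l1 True assms by (intro prod_ennreal) auto
  also have "(\<Prod>j\<in>?K. if j < m then 1 - lamf s t x y else 1 - t) =
      (1 - lamf s t x y) ^ card {j\<in>?K. j < m} * (1 - t) ^ card {j\<in>?K. \<not> j < m}"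
    by (rule prod_if_card) simp
  also have "{j\<in>?K. j < m} = {1..<m}" using assms by auto
  also have "{j\<in>?K. \<not> j < m} = {m<..<l}" using assms by auto
  moreover have "x < y - t \<or> y \<le> x" using True by linarith
  ultimately show ?thesis using True assms by (simp add: Cf_def Wf_def)
qed

lemma Wf_meas: "(\<lambda>p. ennreal (Wf m k s t (snd p) (fst p))) \<in> borel_measurable (borel \<Otimes>\<^sub>M borel)"
  unfolding Wf_def lamf_def by measurable

lemma Wf_meas_x: "(\<lambda>x. ennreal (Wf m k s t x y)) \<in> borel_measurable borel"
  using measurable_compose[OF measurable_Pair[OF measurable_const[of y] measurable_ident_sets[OF refl]] Wf_meas[of m k s t]]
  by simp

lemma Wf_meas_y: "(\<lambda>y. \<integral>\<^sup>+ x. ennreal (Wf m k s t x y) \<partial>lborel) \<in> borel_measurable borel"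
proof (rule lborel.borel_measurable_nn_integral)
  have "(\<lambda>p. ennreal (Wf m k s t (snd p) (fst p))) \<in> borel_measurable (borel \<Otimes>\<^sub>M lborel)"
    using Wf_meas[of m k s t] by (subst measurable_cong_sets[OF sets_pair_measure_cong[OF refl sets_lborel] refl])
  then show "case_prod (\<lambda>y x. ennreal (Wf m k s t x y)) \<in> borel_measurable (borel \<Otimes>\<^sub>M lborel)"
    by (simp add: case_prod_unfold)
qed

lemma Gf_meas_UU: "Gf m s t x y j \<in> borel_measurable UU"
proof -
  have "(\<lambda>v. Gf m s t ((\<lambda>_. x) v) ((\<lambda>_. y) v) j ((\<lambda>v. v) v)) \<in> borel_measurable borel"
    by (intro Gf_meas) auto
  then show ?thesis by (simp add: measurable_cong_sets[OF sets_UU refl])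
qed

lemma Q_lemma:
  assumes "1 \<le> m" "m < l" "0 \<le> s" "0 \<le> t"
  shows "(\<integral>\<^sup>+ x. indicator {x. Am m s x \<and> Am l t x} x \<partial>(PiM {1..l} (\<lambda>_. UU))) = Qf m (l - m - 1) s t"
proof -
  interpret PP: product_prob_space "\<lambda>_::nat. UU"
    using UU_prob by (simp add: product_prob_space_def product_sigma_finite_def prob_space_imp_sigma_finite
        product_prob_space_axioms_def)
  define K where "K = {1..l} - {m, l}"
  have Kf: "finite K" by (simp add: K_def)
  have mK: "m \<notin> K" and lK: "l \<notin> insert m K" and ml: "m \<noteq> l" using assms by (auto simp: K_def)
  have I: "{1..l} = insert l (insert m K)" using assms by (auto simp: K_def)
  have jK: "j \<noteq> m" "j \<noteq> l" if "j \<in> K" for j using that by (auto simp: K_def)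
  note [measurable] = Kf
  have "(\<integral>\<^sup>+ x. indicator {x. Am m s x \<and> Am l t x} x \<partial>(PiM {1..l} (\<lambda>_. UU))) =
     (\<integral>\<^sup>+ x. Cf s t (x m) (x l) * (\<Prod>j\<in>K. Gf m s t (x m) (x l) j (x j)) \<partial>(PiM (insert l (insert m K)) (\<lambda>_. UU)))"
    unfolding I[symmetric] using Am_factor[OF assms(1,2), folded K_def] by (intro nn_integral_cong) simp
  also have "\<dots> = (\<integral>\<^sup>+ y. \<integral>\<^sup>+ z. Cf s t (z m) y * (\<Prod>j\<in>K. Gf m s t (z m) y j (z j)) \<partial>(PiM (insert m K) (\<lambda>_. UU)) \<partial>UU)"
  proof (subst PP.product_nn_integral_insert_rev)
    show "(\<lambda>x. Cf s t (x m) (x l) * (\<Prod>j\<in>K. Gf m s t (x m) (x l) j (x j))) \<in> borel_measurable (PiM (insert l (insert m K)) (\<lambda>_. UU))"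
      by (rule meas_F) (auto intro: comp_meas)
  qed (use Kf lK ml jK in \<open>auto intro!: nn_integral_cong prod.cong\<close>)
  also have "\<dots> = (\<integral>\<^sup>+ y. \<integral>\<^sup>+ x. \<integral>\<^sup>+ w. Cf s t x y * (\<Prod>j\<in>K. Gf m s t x y j (w j)) \<partial>(PiM K (\<lambda>_. UU)) \<partial>UU \<partial>UU)"
  proof (intro nn_integral_cong)
    fix y
    show "(\<integral>\<^sup>+ z. Cf s t (z m) y * (\<Prod>j\<in>K. Gf m s t (z m) y j (z j)) \<partial>(PiM (insert m K) (\<lambda>_. UU))) =
      (\<integral>\<^sup>+ x. \<integral>\<^sup>+ w. Cf s t x y * (\<Prod>j\<in>K. Gf m s t x y j (w j)) \<partial>(PiM K (\<lambda>_. UU)) \<partial>UU)"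
    proof (subst PP.product_nn_integral_insert_rev)
      show "(\<lambda>z. Cf s t (z m) y * (\<Prod>j\<in>K. Gf m s t (z m) y j (z j))) \<in> borel_measurable (PiM (insert m K) (\<lambda>_. UU))"
        by (rule meas_F) (auto intro: comp_meas)
    qed (use Kf mK jK in \<open>auto intro!: nn_integral_cong prod.cong\<close>)
  qed
  also have "\<dots> = (\<integral>\<^sup>+ y. \<integral>\<^sup>+ x. Cf s t x y * (\<Prod>j\<in>K. \<integral>\<^sup>+ v. Gf m s t x y j v \<partial>UU) \<partial>UU \<partial>UU)"
  proof (intro nn_integral_cong)
    fix y x
    have pm: "(\<lambda>w. \<Prod>j\<in>K. Gf m s t x y j (w j)) \<in> borel_measurable (PiM K (\<lambda>_. UU))"
      unfolding PiM_UU_meas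
    proof (intro borel_measurable_prod_ennreal)
      fix j assume "j \<in> K"
      then have "(\<lambda>w. w j) \<in> borel_measurable (PiM K (\<lambda>_. borel))"
        by (rule measurable_component_singleton)
      then show "(\<lambda>w. Gf m s t x y j (w j)) \<in> borel_measurable (PiM K (\<lambda>_. borel))"
        using Gf_meas[of "\<lambda>_. x" _ "\<lambda>_. y" "\<lambda>w. w j"] by simp
    qed
    show "(\<integral>\<^sup>+ w. Cf s t x y * (\<Prod>j\<in>K. Gf m s t x y j (w j)) \<partial>PiM K (\<lambda>_. UU)) =
        Cf s t x y * (\<Prod>j\<in>K. \<integral>\<^sup>+ v. Gf m s t x y j v \<partial>UU)"
      using pm Kf by (simp add: nn_integral_cmult PP.product_nn_integral_prod Gf_meas_UU)
  qed
  also have "\<dots> = (\<integral>\<^sup>+ y. \<integral>\<^sup>+ x. ennreal (Wf m (l - m - 1) s t x y) \<partial>UU \<partial>UU)"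
  proof (intro nn_integral_cong_AE)
    show "AE y in UU. (\<integral>\<^sup>+ x. Cf s t x y * (\<Prod>j\<in>K. \<integral>\<^sup>+ v. Gf m s t x y j v \<partial>UU) \<partial>UU) =
        (\<integral>\<^sup>+ x. ennreal (Wf m (l - m - 1) s t x y) \<partial>UU)"
      using AE_UU
    proof eventually_elim
      case (elim y)
      show ?case
      proof (intro nn_integral_cong_AE)
        show "AE x in UU. Cf s t x y * (\<Prod>j\<in>K. \<integral>\<^sup>+ v. Gf m s t x y j v \<partial>UU) = ennreal (Wf m (l - m - 1) s t x y)"
          using AE_UU
        proof eventually_elim
          case (elim x)
          then show ?case using PW[of m l s t x y] assms \<open>0 < y \<and> y \<le> 1\<close> unfolding K_def by auto
        qed
      qed
    qed
  qed
  also have "\<dots> = Qf m (l - m - 1) s t"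
  proof -
    have inner: "(\<integral>\<^sup>+ x. ennreal (Wf m (l - m - 1) s t x y) \<partial>UU) = (\<integral>\<^sup>+ x. ennreal (Wf m (l - m - 1) s t x y) \<partial>lborel)" for y
      using assms by (subst UU_nn[OF Wf_meas_x]) (auto simp: Wf_def indicator_def intro!: nn_integral_cong)
    have "(\<integral>\<^sup>+ y. \<integral>\<^sup>+ x. ennreal (Wf m (l - m - 1) s t x y) \<partial>UU \<partial>UU) = (\<integral>\<^sup>+ y. \<integral>\<^sup>+ x. ennreal (Wf m (l - m - 1) s t x y) \<partial>lborel \<partial>UU)"
      unfolding inner ..
    also have "\<dots> = (\<integral>\<^sup>+ y. (\<integral>\<^sup>+ x. ennreal (Wf m (l - m - 1) s t x y) \<partial>lborel) * indicator {0<..1} y \<partial>lborel)"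
      using Wf_meas_y by (rule UU_nn)
    also have "\<dots> = (\<integral>\<^sup>+ y. \<integral>\<^sup>+ x. ennreal (Wf m (l - m - 1) s t x y) \<partial>lborel \<partial>lborel)"
      using assms by (intro nn_integral_cong) (auto simp: Wf_def indicator_def)
    finally show ?thesis by (simp only: Qf_def)
  qed
  finally show ?thesis .
qed

lemma gapZ_meas:
  assumes "\<And>j. X j \<in> borel_measurable M"
  shows "gapZ X n \<in> borel_measurable M"
proof -
  have eq: "Max {X j \<omega> | j. j < n \<and> X j \<omega> < X n \<omega>} =
    (\<Sum>S\<in>Pow {..<n}. indicator {\<omega>. \<forall>j\<in>{..<n}. (X j \<omega> < X n \<omega>) = (j \<in> S)} \<omega> * Max ((\<lambda>j. X j \<omega>) ` S))" for \<omega>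
  proof -
    let ?S0 = "{j. j < n \<and> X j \<omega> < X n \<omega>}"
    have "(\<Sum>S\<in>Pow {..<n}. indicator {\<omega>. \<forall>j\<in>{..<n}. (X j \<omega> < X n \<omega>) = (j \<in> S)} \<omega> * Max ((\<lambda>j. X j \<omega>) ` S))
        = (\<Sum>S\<in>Pow {..<n}. if S = ?S0 then Max ((\<lambda>j. X j \<omega>) ` S) else 0)"
      by (rule sum.cong) (auto simp: indicator_def)
    also have "\<dots> = Max ((\<lambda>j. X j \<omega>) ` ?S0)"
      by (subst sum.delta) auto
    also have "(\<lambda>j. X j \<omega>) ` ?S0 = {X j \<omega> | j. j < n \<and> X j \<omega> < X n \<omega>}" by auto
    finally show ?thesis by simp
  qed
  have [measurable]: "X n \<in> borel_measurable M" by fact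
  have [measurable]: "Measurable.pred M (\<lambda>\<omega>. \<forall>j\<in>{..<n}. (X j \<omega> < X n \<omega>) = (j \<in> S))" for S
  proof (rule pred_intros_finite(3))
    fix j
    have [measurable]: "X j \<in> borel_measurable M" by fact
    show "Measurable.pred M (\<lambda>\<omega>. (X j \<omega> < X n \<omega>) = (j \<in> S))" by measurable
  qed simp
  have [measurable]: "(\<lambda>\<omega>. Max ((\<lambda>j. X j \<omega>) ` S)) \<in> borel_measurable M" if "S \<in> Pow {..<n}" for S
    using that by (intro borel_measurable_Max) (auto intro: finite_subset assms)
  show ?thesis
    unfolding gapZ_def[abs_def] eq
    by (intro borel_measurable_diff borel_measurable_sum borel_measurable_times) (auto simp del: Pow_iff)
qed

lemma gapZ_props:
  assumes "1 \<le> n" "X 0 \<omega> = 0" "0 < X n \<omega>"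
  shows "0 \<le> gapZ X n \<omega>" "gapZ X n \<omega> \<le> X n \<omega>"
    "\<And>s. 0 \<le> s \<Longrightarrow> s < gapZ X n \<omega> \<longleftrightarrow> Am n s (\<lambda>i. X i \<omega>)"
proof -
  let ?S = "{X j \<omega> | j. j < n \<and> X j \<omega> < X n \<omega>}"
  have fin: "finite ?S" by simp
  have "0 \<in> ?S" using assms by (auto intro!: exI[of _ 0])
  then have ne: "?S \<noteq> {}" by auto
  have Mlt: "Max ?S < X n \<omega>" using fin ne by (subst Max_less_iff) auto
  have Mge: "0 \<le> Max ?S" using fin \<open>0 \<in> ?S\<close> by (rule Max_ge)
  show "0 \<le> gapZ X n \<omega>" "gapZ X n \<omega> \<le> X n \<omega>" using Mlt Mge by (auto simp: gapZ_def)
  fix s :: real assume s: "0 \<le> s"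
  have "s < gapZ X n \<omega> \<longleftrightarrow> Max ?S < X n \<omega> - s" by (auto simp: gapZ_def)
  also have "\<dots> \<longleftrightarrow> (\<forall>a\<in>?S. a < X n \<omega> - s)" using fin ne by (rule Max_less_iff)
  also have "\<dots> \<longleftrightarrow> Am n s (\<lambda>i. X i \<omega>)"
  proof
    assume H: "\<forall>a\<in>?S. a < X n \<omega> - s"
    have "0 < X n \<omega> - s" using H \<open>0 \<in> ?S\<close> by blast
    moreover have "\<not> (X n \<omega> - s \<le> X j \<omega> \<and> X j \<omega> < X n \<omega>)" if "j \<in> {1..<n}" for j
      using H that by fastforce
    ultimately show "Am n s (\<lambda>i. X i \<omega>)" by (auto simp: Am_def)
  next
    assume A: "Am n s (\<lambda>i. X i \<omega>)"
    show "\<forall>a\<in>?S. a < X n \<omega> - s"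
    proof safe
      fix j assume j: "j < n" "X j \<omega> < X n \<omega>"
      show "X j \<omega> < X n \<omega> - s"
      proof (cases "j = 0")
        case True then show ?thesis using A assms by (auto simp: Am_def)
      next
        case False then show ?thesis using A j by (force simp: Am_def)
      qed
    qed
  qed
  finally show "s < gapZ X n \<omega> \<longleftrightarrow> Am n s (\<lambda>i. X i \<omega>)" .
qed

lemma Am_restrict: "n \<le> l \<Longrightarrow> 1 \<le> n \<Longrightarrow> Am n s (restrict x {1..l}) = Am n s x"
  by (auto simp: Am_def)

lemma gapZ_ennreal:
  assumes "1 \<le> n" "X 0 \<omega> = 0" "0 < X n \<omega>"
  shows "ennreal (gapZ X n \<omega>) = (\<integral>\<^sup>+ s. indicator {s. 0 \<le> s \<and> Am n s (\<lambda>i. X i \<omega>)} s \<partial>lborel)"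
proof -
  have "{s. 0 \<le> s \<and> Am n s (\<lambda>i. X i \<omega>)} = {0..<gapZ X n \<omega>}"
    using gapZ_props[of n X \<omega>, OF assms] by auto
  then show ?thesis using gapZ_props(1)[of n X \<omega>, OF assms] by simp
qed

lemma indicator_pred_meas:
  assumes "Measurable.pred N P"
  shows "(\<lambda>x. indicator {x. P x} x :: ennreal) \<in> borel_measurable N"
  using assms by (intro borel_measurable_indicator'[where f="\<lambda>x. x" and A="\<lambda>_. {x. P x}"]) (simp add: pred_def)

lemma indicator_pred_meas2:
  assumes "Measurable.pred N (\<lambda>p. P (fst p) (snd p))"
  shows "(\<lambda>p. indicator {y. P (fst p) y} (snd p) :: ennreal) \<in> borel_measurable N"
  using assms by (intro borel_measurable_indicator'[where f="snd" and A="\<lambda>p. {y. P (fst p) y}"]) (simp add: pred_def)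

lemma pred_Am_s: "Measurable.pred borel (\<lambda>s. Am n s x)"
  unfolding Am_def by (intro pred_intros_logic pred_intros_finite) measurable

lemma ind_Am_s_meas[measurable]: "(indicator {s. 0 \<le> s \<and> Am n s x} :: real \<Rightarrow> ennreal) \<in> borel_measurable borel"
proof -
  have "Measurable.pred borel (\<lambda>s. 0 \<le> s \<and> Am n s x)" using pred_Am_s by measurable
  from indicator_pred_meas[OF this] show ?thesis by simp
qed

declare sets_UU[measurable_cong]

lemma PiM_UU_sets: "sets (PiM I (\<lambda>_. UU)) = sets (PiM I (\<lambda>_. borel))"
  by (rule sets_PiM_cong) (auto simp: UU_def)

theorem lemma5:
  fixes M :: "'a measure" and X :: "nat \<Rightarrow> 'a \<Rightarrow> real" and m l :: nat
  assumes "prob_space M"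
    and "\<And>\<omega>. X 0 \<omega> = 0"
    and "\<And>i. i \<ge> 1 \<Longrightarrow> X i \<in> borel_measurable M"
    and "\<And>i. i \<ge> 1 \<Longrightarrow> distr M borel (X i) = uniform_measure lborel {0<..1}"
    and "prob_space.indep_vars M (\<lambda>_. borel) X {1..}"
    and "1 \<le> m" and "m < l"
  shows "covariance M (gapZ X m) (gapZ X l) = 0"
proof -
  interpret P: prob_space M by fact
  interpret PS: pair_sigma_finite M lborel
    by (simp add: P.sigma_finite_measure_axioms lborel.sigma_finite_measure_axioms pair_sigma_finite.intro)
  define k where "k = l - m - 1"
  have lk: "l = m + k + 1" using assms by (simp add: k_def)
  have Xm[measurable]: "X j \<in> borel_measurable M" for j
  proof (cases "j = 0")
    case True
    then have "X j = (\<lambda>_. 0)" using assms(2) by auto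
    then show ?thesis by simp
  qed (use assms(3) in auto)
  define Xr where "Xr = (\<lambda>\<omega>. \<lambda>i\<in>{1..l}. X i \<omega>)"
  have Xr_meas[measurable]: "Xr \<in> M \<rightarrow>\<^sub>M PiM {1..l} (\<lambda>_. borel)"
    unfolding Xr_def by (rule measurable_restrict) auto
  have distrX: "distr M (PiM {1..l} (\<lambda>_. borel)) Xr = PiM {1..l} (\<lambda>_. UU)"
  proof -
    have "P.indep_vars (\<lambda>_. borel) X {1..l}"
      using P.indep_vars_subset[OF assms(5)] by auto
    then have "distr M (PiM {1..l} (\<lambda>_. borel)) Xr = PiM {1..l} (\<lambda>i. distr M borel (X i))"
      unfolding Xr_def using assms(7) by (subst (asm) P.indep_vars_iff_distr_eq_PiM') auto
    also have "\<dots> = PiM {1..l} (\<lambda>_. UU)"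
      by (rule PiM_cong) (auto simp: assms(4) UU_def)
    finally show ?thesis .
  qed
  have transfer: "(\<integral>\<^sup>+ \<omega>. h (Xr \<omega>) \<partial>M) = (\<integral>\<^sup>+ x. h x \<partial>PiM {1..l} (\<lambda>_. UU))"
    if hm: "h \<in> borel_measurable (PiM {1..l} (\<lambda>_. borel))" for h
  proof -
    have "(\<integral>\<^sup>+ x. h x \<partial>PiM {1..l} (\<lambda>_. UU)) = (\<integral>\<^sup>+ x. h x \<partial>distr M (PiM {1..l} (\<lambda>_. borel)) Xr)"
      unfolding distrX ..
    also have "\<dots> = (\<integral>\<^sup>+ \<omega>. h (Xr \<omega>) \<partial>M)"
      using hm Xr_meas by (intro nn_integral_distr) auto
    finally show ?thesis ..
  qed
  have AEpos: "AE \<omega> in M. \<forall>i\<in>{1..l}. 0 < X i \<omega> \<and> X i \<omega> \<le> 1"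
  proof (rule AE_finite_allI)
    fix i :: nat assume i: "i \<in> {1..l}"
    have "AE x in distr M borel (X i). 0 < x \<and> x \<le> 1"
      using i unfolding assms(4)[of i, OF conjunct1[OF i[unfolded atLeastAtMost_iff]]]
      by (intro AE_uniform_measureI) auto
    then show "AE \<omega> in M. 0 < X i \<omega> \<and> X i \<omega> \<le> 1"
      by (rule AE_distrD[rotated]) simp
  qed simp
  have Xr_eq: "Am n s (Xr \<omega>) = Am n s (\<lambda>i. X i \<omega>)" if "1 \<le> n" "n \<le> l" for n s \<omega>
    unfolding Xr_def using Am_restrict[OF that(2,1), of s "\<lambda>i. X i \<omega>"] by simp
  have rep: "AE \<omega> in M. ennreal (gapZ X n \<omega>) = (\<integral>\<^sup>+ s. indicator {s. 0 \<le> s \<and> Am n s (Xr \<omega>)} s \<partial>lborel)"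
    if "1 \<le> n" "n \<le> l" for n
    using AEpos
  proof eventually_elim
    case (elim \<omega>)
    then show ?case using gapZ_ennreal[of n X \<omega>] that assms(2) Xr_eq[OF that] by auto
  qed
  have bnd: "AE \<omega> in M. 0 \<le> gapZ X n \<omega> \<and> gapZ X n \<omega> \<le> 1" if "1 \<le> n" "n \<le> l" for n
    using AEpos
  proof eventually_elim
    case (elim \<omega>)
    then show ?case using gapZ_props(1,2)[of n X \<omega>] that assms(2) by force
  qed
  have int: "integrable M (gapZ X n)" if "1 \<le> n" "n \<le> l" for n
    using bnd[OF that] by (intro P.integrable_const_bound[where B=1]) (auto intro: gapZ_meas)
  have predA: "Measurable.pred (M \<Otimes>\<^sub>M lborel) (\<lambda>p. Am n (snd p) (Xr (fst p)))" if "1 \<le> n" "n \<le> l" for n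
  proof -
    have Xrf: "(\<lambda>p. Xr (fst p)) \<in> M \<Otimes>\<^sub>M lborel \<rightarrow>\<^sub>M PiM {1..l} (\<lambda>_. borel)" by measurable
    show ?thesis using that by (intro pred_Am[where l=l, OF _ _ Xrf]) auto
  qed
  have predA0: "Measurable.pred M (\<lambda>\<omega>. Am n s (Xr \<omega>))" if "1 \<le> n" "n \<le> l" for n s
    using that by (intro pred_Am[where l=l, OF _ _ Xr_meas]) auto
  have predAP: "Measurable.pred (PiM {1..l} (\<lambda>_. borel)) (\<lambda>x. Am n s x)" if "1 \<le> n" "n \<le> l" for n s
    using that by (intro pred_Am[where l=l, OF _ _ measurable_ident_sets[OF refl]]) auto
  have Al0: "Am l 0 (Xr \<omega>)" if "0 < X l \<omega>" for \<omega>
    using that assms Xr_eq[of l 0 \<omega>] by (auto simp: Am_def)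
  have inner: "(\<integral>\<^sup>+ \<omega>. indicator {\<omega>. Am m s (Xr \<omega>) \<and> Am l t (Xr \<omega>)} \<omega> \<partial>M) = Qf m k s t"
    if "0 \<le> s" "0 \<le> t" for s t
  proof -
    have "(\<integral>\<^sup>+ \<omega>. indicator {\<omega>. Am m s (Xr \<omega>) \<and> Am l t (Xr \<omega>)} \<omega> \<partial>M) =
        (\<integral>\<^sup>+ \<omega>. indicator {x. Am m s x \<and> Am l t x} (Xr \<omega>) \<partial>M)"
      by (intro nn_integral_cong) (auto simp: indicator_def)
    also have "\<dots> = (\<integral>\<^sup>+ x. indicator {x. Am m s x \<and> Am l t x} x \<partial>PiM {1..l} (\<lambda>_. UU))"
    proof (rule transfer)
      have pr: "Measurable.pred (PiM {1..l} (\<lambda>_. borel)) (\<lambda>x. Am m s x \<and> Am l t x)"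
        using predAP[of m s] predAP[of l t] assms by auto
      show "(indicator {x. Am m s x \<and> Am l t x} :: _ \<Rightarrow> ennreal) \<in> borel_measurable (PiM {1..l} (\<lambda>_. borel))"
        using indicator_pred_meas[OF pr] by simp
    qed
    also have "\<dots> = Qf m k s t" unfolding k_def using assms that by (intro Q_lemma) auto
    finally show ?thesis .
  qed
  have predG: "Measurable.pred N (\<lambda>p. Am n (g p) (Xr (f p)))"
    if "1 \<le> n" "n \<le> l" "f \<in> N \<rightarrow>\<^sub>M M" "g \<in> borel_measurable N" for n N f g
  proof -
    have Xrf: "(\<lambda>p. Xr (f p)) \<in> N \<rightarrow>\<^sub>M PiM {1..l} (\<lambda>_. borel)"
      using that(3) by measurable
    show ?thesis using that by (intro pred_Am[where l=l, OF _ _ Xrf]) auto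
  qed
  have E1: "(\<integral>\<^sup>+ \<omega>. ennreal (gapZ X m \<omega>) \<partial>M) = ennreal (1 / (m + 1))"
  proof -
    have "(\<integral>\<^sup>+ \<omega>. ennreal (gapZ X m \<omega>) \<partial>M) =
        (\<integral>\<^sup>+ \<omega>. \<integral>\<^sup>+ s. indicator {s. 0 \<le> s \<and> (Am m s (Xr \<omega>) \<and> Am l 0 (Xr \<omega>))} s \<partial>lborel \<partial>M)"
    proof (rule nn_integral_cong_AE)
      show "AE \<omega> in M. ennreal (gapZ X m \<omega>) =
          (\<integral>\<^sup>+ s. indicator {s. 0 \<le> s \<and> (Am m s (Xr \<omega>) \<and> Am l 0 (Xr \<omega>))} s \<partial>lborel)"
        using rep[of m, OF \<open>1 \<le> m\<close> less_imp_le[OF \<open>m < l\<close>]] AEpos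
      proof eventually_elim
        case (elim \<omega>)
        then have "Am l 0 (Xr \<omega>)" using Al0 assms by auto
        then show ?case using elim by simp
      qed
    qed
    also have "\<dots> = (\<integral>\<^sup>+ s. \<integral>\<^sup>+ \<omega>. indicator {s. 0 \<le> s \<and> (Am m s (Xr \<omega>) \<and> Am l 0 (Xr \<omega>))} s \<partial>M \<partial>lborel)"
    proof (rule PS.Fubini'[symmetric])
      have "Measurable.pred (M \<Otimes>\<^sub>M lborel) (\<lambda>p. 0 \<le> snd p \<and> (Am m (snd p) (Xr (fst p)) \<and> Am l 0 (Xr (fst p))))"
        using assms by (intro pred_intros_logic predG) auto
      from indicator_pred_meas2[OF this]
      show "case_prod (\<lambda>\<omega> s. indicator {s. 0 \<le> s \<and> (Am m s (Xr \<omega>) \<and> Am l 0 (Xr \<omega>))} s :: ennreal) \<in> borel_measurable (M \<Otimes>\<^sub>M lborel)"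
        by (simp add: case_prod_unfold)
    qed
    also have "\<dots> = (\<integral>\<^sup>+ s. indicator {0..} s * Qf m k s 0 \<partial>lborel)"
    proof (rule nn_integral_cong)
      fix s :: real
      show "(\<integral>\<^sup>+ \<omega>. indicator {s. 0 \<le> s \<and> (Am m s (Xr \<omega>) \<and> Am l 0 (Xr \<omega>))} s \<partial>M) = indicator {0..} s * Qf m k s 0"
      proof (cases "0 \<le> s")
        case True
        then have "(\<integral>\<^sup>+ \<omega>. indicator {s. 0 \<le> s \<and> (Am m s (Xr \<omega>) \<and> Am l 0 (Xr \<omega>))} s \<partial>M)
            = (\<integral>\<^sup>+ \<omega>. indicator {\<omega>. Am m s (Xr \<omega>) \<and> Am l 0 (Xr \<omega>)} \<omega> \<partial>M)"
          by (intro nn_integral_cong) (auto simp: indicator_def)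
        also have "\<dots> = Qf m k s 0" using True by (rule inner) simp
        finally show ?thesis using True by simp
      qed simp
    qed
    also have "\<dots> = ennreal (1 / (m + 1))" using C2 assms by simp
    finally show ?thesis .
  qed
  have E2: "(\<integral>\<^sup>+ \<omega>. ennreal (gapZ X l \<omega>) \<partial>M) = ennreal (1 / (l + 1))"
  proof -
    have "(\<integral>\<^sup>+ \<omega>. ennreal (gapZ X l \<omega>) \<partial>M) =
        (\<integral>\<^sup>+ \<omega>. \<integral>\<^sup>+ t. indicator {t. 0 \<le> t \<and> (Am m 0 (Xr \<omega>) \<and> Am l t (Xr \<omega>))} t \<partial>lborel \<partial>M)"
    proof (rule nn_integral_cong_AE)
      show "AE \<omega> in M. ennreal (gapZ X l \<omega>) =
          (\<integral>\<^sup>+ t. indicator {t. 0 \<le> t \<and> (Am m 0 (Xr \<omega>) \<and> Am l t (Xr \<omega>))} t \<partial>lborel)"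
        using rep[of l, OF _ order_refl, OF order_trans[OF \<open>1 \<le> m\<close> less_imp_le[OF \<open>m < l\<close>]]] AEpos
      proof eventually_elim
        case (elim \<omega>)
        then have "0 < X m \<omega>" using assms by auto
        then have "Am m 0 (Xr \<omega>)" using Xr_eq[of m 0 \<omega>] assms by (auto simp: Am_def)
        then show ?case using elim assms by simp
      qed
    qed
    also have "\<dots> = (\<integral>\<^sup>+ t. \<integral>\<^sup>+ \<omega>. indicator {t. 0 \<le> t \<and> (Am m 0 (Xr \<omega>) \<and> Am l t (Xr \<omega>))} t \<partial>M \<partial>lborel)"
    proof (rule PS.Fubini'[symmetric])
      have "Measurable.pred (M \<Otimes>\<^sub>M lborel) (\<lambda>p. 0 \<le> snd p \<and> (Am m 0 (Xr (fst p)) \<and> Am l (snd p) (Xr (fst p))))"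
        using assms by (intro pred_intros_logic predG) auto
      from indicator_pred_meas2[OF this]
      show "case_prod (\<lambda>\<omega> t. indicator {t. 0 \<le> t \<and> (Am m 0 (Xr \<omega>) \<and> Am l t (Xr \<omega>))} t :: ennreal) \<in> borel_measurable (M \<Otimes>\<^sub>M lborel)"
        by (simp add: case_prod_unfold)
    qed
    also have "\<dots> = (\<integral>\<^sup>+ t. indicator {0..} t * Qf m k 0 t \<partial>lborel)"
    proof (rule nn_integral_cong)
      fix t :: real
      show "(\<integral>\<^sup>+ \<omega>. indicator {t. 0 \<le> t \<and> (Am m 0 (Xr \<omega>) \<and> Am l t (Xr \<omega>))} t \<partial>M) = indicator {0..} t * Qf m k 0 t"
      proof (cases "0 \<le> t")
        case True
        then have "(\<integral>\<^sup>+ \<omega>. indicator {t. 0 \<le> t \<and> (Am m 0 (Xr \<omega>) \<and> Am l t (Xr \<omega>))} t \<partial>M)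
            = (\<integral>\<^sup>+ \<omega>. indicator {\<omega>. Am m 0 (Xr \<omega>) \<and> Am l t (Xr \<omega>)} \<omega> \<partial>M)"
          by (intro nn_integral_cong) (auto simp: indicator_def)
        also have "\<dots> = Qf m k 0 t" using True by (intro inner) simp_all
        finally show ?thesis using True by simp
      qed simp
    qed
    also have "\<dots> = ennreal (1 / (l + 1))" using C3[of m k] assms lk by simp
    finally show ?thesis .
  qed
  have ml: "m \<le> l" "1 \<le> l" using assms by auto
  interpret PS2: pair_sigma_finite "M \<Otimes>\<^sub>M lborel" lborel
    by (simp add: PS.sigma_finite_measure_axioms lborel.sigma_finite_measure_axioms pair_sigma_finite.intro
        PS.sigma_finite_up_in_pair_measure_generator sigma_finite_pair_measure P.sigma_finite_measure_axioms)
  define F where "F \<omega> s t = (indicator {s. 0 \<le> s \<and> Am m s (Xr \<omega>)} s * indicator {t. 0 \<le> t \<and> Am l t (Xr \<omega>)} t :: ennreal)" for \<omega> s t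
  have Fmeas: "(\<lambda>p. F (fst (fst p)) (snd (fst p)) (snd p)) \<in> borel_measurable ((M \<Otimes>\<^sub>M lborel) \<Otimes>\<^sub>M lborel)"
  proof -
    have a: "Measurable.pred ((M \<Otimes>\<^sub>M lborel) \<Otimes>\<^sub>M lborel) (\<lambda>p. 0 \<le> snd (fst p) \<and> Am m (snd (fst p)) (Xr (fst (fst p))))"
      using assms ml by (intro pred_intros_logic predG) auto
    have b: "Measurable.pred ((M \<Otimes>\<^sub>M lborel) \<Otimes>\<^sub>M lborel) (\<lambda>p. 0 \<le> snd p \<and> Am l (snd p) (Xr (fst (fst p))))"
      using assms ml by (intro pred_intros_logic predG) auto
    have "(\<lambda>p. F (fst (fst p)) (snd (fst p)) (snd p)) = (\<lambda>p. indicator {p. 0 \<le> snd (fst p) \<and> Am m (snd (fst p)) (Xr (fst (fst p)))} p * indicator {p. 0 \<le> snd p \<and> Am l (snd p) (Xr (fst (fst p)))} p)"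
      by (auto simp: F_def indicator_def fun_eq_iff)
    also have "\<dots> \<in> borel_measurable ((M \<Otimes>\<^sub>M lborel) \<Otimes>\<^sub>M lborel)"
      using indicator_pred_meas[OF a] indicator_pred_meas[OF b] by (rule borel_measurable_times_ennreal)
    finally show ?thesis .
  qed
  have E12: "(\<integral>\<^sup>+ \<omega>. ennreal (gapZ X m \<omega> * gapZ X l \<omega>) \<partial>M) = ennreal (1 / ((m + 1) * (l + 1)))"
  proof -
    have "(\<integral>\<^sup>+ \<omega>. ennreal (gapZ X m \<omega> * gapZ X l \<omega>) \<partial>M) =
        (\<integral>\<^sup>+ \<omega>. \<integral>\<^sup>+ s. \<integral>\<^sup>+ t. F \<omega> s t \<partial>lborel \<partial>lborel \<partial>M)"
    proof (rule nn_integral_cong_AE)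
      show "AE \<omega> in M. ennreal (gapZ X m \<omega> * gapZ X l \<omega>) = (\<integral>\<^sup>+ s. \<integral>\<^sup>+ t. F \<omega> s t \<partial>lborel \<partial>lborel)"
        using rep[of m, OF \<open>1 \<le> m\<close> ml(1)] rep[of l, OF ml(2) order_refl] bnd[of m, OF \<open>1 \<le> m\<close> ml(1)] bnd[of l, OF ml(2) order_refl]
      proof eventually_elim
        case (elim \<omega>)
        have "ennreal (gapZ X m \<omega> * gapZ X l \<omega>) = ennreal (gapZ X m \<omega>) * ennreal (gapZ X l \<omega>)"
          using elim by (simp add: ennreal_mult)
        also have "\<dots> = (\<integral>\<^sup>+ s. indicator {s. 0 \<le> s \<and> Am m s (Xr \<omega>)} s * ennreal (gapZ X l \<omega>) \<partial>lborel)"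
          using elim by (subst nn_integral_multc) (auto simp: ind_Am_s_meas)
        also have "\<dots> = (\<integral>\<^sup>+ s. \<integral>\<^sup>+ t. F \<omega> s t \<partial>lborel \<partial>lborel)"
          unfolding F_def using elim by (intro nn_integral_cong) (subst nn_integral_cmult; auto simp: ind_Am_s_meas)
        finally show ?case .
      qed
    qed
    also have "\<dots> = (\<integral>\<^sup>+ s. \<integral>\<^sup>+ \<omega>. \<integral>\<^sup>+ t. F \<omega> s t \<partial>lborel \<partial>M \<partial>lborel)"
    proof (rule PS.Fubini'[symmetric])
      show "case_prod (\<lambda>\<omega> s. \<integral>\<^sup>+ t. F \<omega> s t \<partial>lborel) \<in> borel_measurable (M \<Otimes>\<^sub>M lborel)"
        using lborel.borel_measurable_nn_integral[of "\<lambda>p t. F (fst p) (snd p) t" "M \<Otimes>\<^sub>M lborel"] Fmeas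
        by (simp add: case_prod_unfold)
    qed
    also have "\<dots> = (\<integral>\<^sup>+ s. \<integral>\<^sup>+ t. \<integral>\<^sup>+ \<omega>. F \<omega> s t \<partial>M \<partial>lborel \<partial>lborel)"
    proof (rule nn_integral_cong)
      fix s :: real
      show "(\<integral>\<^sup>+ \<omega>. \<integral>\<^sup>+ t. F \<omega> s t \<partial>lborel \<partial>M) = (\<integral>\<^sup>+ t. \<integral>\<^sup>+ \<omega>. F \<omega> s t \<partial>M \<partial>lborel)"
      proof (rule PS.Fubini'[symmetric])
        have "(\<lambda>p. (\<lambda>q. F (fst (fst q)) (snd (fst q)) (snd q)) ((fst p, s), snd p)) \<in> borel_measurable (M \<Otimes>\<^sub>M lborel)"
          by (rule measurable_compose[OF _ Fmeas]) measurable
        then show "case_prod (\<lambda>\<omega> t. F \<omega> s t) \<in> borel_measurable (M \<Otimes>\<^sub>M lborel)"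
          by (simp add: case_prod_unfold)
      qed
    qed
    also have "\<dots> = (\<integral>\<^sup>+ s. \<integral>\<^sup>+ t. indicator {0..} s * indicator {0..} t * Qf m k s t \<partial>lborel \<partial>lborel)"
    proof (intro nn_integral_cong)
      fix s t :: real
      show "(\<integral>\<^sup>+ \<omega>. F \<omega> s t \<partial>M) = indicator {0..} s * indicator {0..} t * Qf m k s t"
      proof (cases "0 \<le> s \<and> 0 \<le> t")
        case True
        then have "(\<integral>\<^sup>+ \<omega>. F \<omega> s t \<partial>M) = (\<integral>\<^sup>+ \<omega>. indicator {\<omega>. Am m s (Xr \<omega>) \<and> Am l t (Xr \<omega>)} \<omega> \<partial>M)"
          unfolding F_def by (intro nn_integral_cong) (auto simp: indicator_def)
        also have "\<dots> = Qf m k s t" using True by (intro inner) simp_all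
        finally show ?thesis using True by simp
      qed (auto simp: F_def)
    qed
    also have "\<dots> = (\<integral>\<^sup>+ s. indicator {0..} s * (\<integral>\<^sup>+ t. indicator {0..} t * Qf m k s t \<partial>lborel) \<partial>lborel)"
    proof (rule nn_integral_cong)
      fix s :: real
      show "(\<integral>\<^sup>+ t. indicator {0..} s * indicator {0..} t * Qf m k s t \<partial>lborel) = indicator {0..} s * (\<integral>\<^sup>+ t. indicator {0..} t * Qf m k s t \<partial>lborel)"
        by (cases "0 \<le> s") auto
    qed
    also have "\<dots> = ennreal (1 / ((m + 1) * (l + 1)))" using C1[of m k] assms lk by (simp add: algebra_simps)
    finally show ?thesis .
  qed
  have Zm_meas[measurable]: "gapZ X n \<in> borel_measurable M" for n
    by (rule gapZ_meas) simp
  have I1: "(\<integral>\<omega>. gapZ X m \<omega> \<partial>M) = 1 / (m + 1)"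
    using E1 bnd[of m, OF \<open>1 \<le> m\<close> ml(1)] by (subst integral_eq_nn_integral) auto
  have I2: "(\<integral>\<omega>. gapZ X l \<omega> \<partial>M) = 1 / (l + 1)"
    using E2 bnd[of l, OF ml(2) order_refl] by (subst integral_eq_nn_integral) auto
  have I12: "(\<integral>\<omega>. gapZ X m \<omega> * gapZ X l \<omega> \<partial>M) = 1 / ((m + 1) * (l + 1))"
    using E12 bnd[of m, OF \<open>1 \<le> m\<close> ml(1)] bnd[of l, OF ml(2) order_refl]
    by (subst integral_eq_nn_integral) (auto elim: eventually_mono)
  have int1: "integrable M (gapZ X m)" using int \<open>1 \<le> m\<close> ml by auto
  have int2: "integrable M (gapZ X l)" using int ml by auto
  have int12: "integrable M (\<lambda>\<omega>. gapZ X m \<omega> * gapZ X l \<omega>)"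
  proof (intro P.integrable_const_bound[where B=1])
    show "AE \<omega> in M. norm (gapZ X m \<omega> * gapZ X l \<omega>) \<le> 1"
      using bnd[of m, OF \<open>1 \<le> m\<close> ml(1)] bnd[of l, OF ml(2) order_refl]
      by eventually_elim (auto simp: abs_mult intro: mult_le_one)
  qed simp
  define a where "a = (\<integral>\<omega>. gapZ X m \<omega> \<partial>M)"
  define b where "b = (\<integral>\<omega>. gapZ X l \<omega> \<partial>M)"
  have "covariance M (gapZ X m) (gapZ X l) =
      (\<integral>\<omega>. (gapZ X m \<omega> * gapZ X l \<omega> - a * gapZ X l \<omega> - b * gapZ X m \<omega>) + a * b \<partial>M)"
    unfolding covariance_def a_def[symmetric] b_def[symmetric]
    by (intro Bochner_Integration.integral_cong) (auto simp: algebra_simps)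
  also have "\<dots> = (\<integral>\<omega>. gapZ X m \<omega> * gapZ X l \<omega> \<partial>M) - a * b - b * a + a * b"
    using int1 int2 int12 by (simp add: Bochner_Integration.integral_add Bochner_Integration.integral_diff b_def[symmetric] a_def[symmetric] P.prob_space)
  also have "\<dots> = 0" using I1 I2 I12 unfolding a_def b_def by (simp add: algebra_simps)
  finally show ?thesis .
qed


end
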